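(* Let $\alpha\in(0,1)$ be irrational with continued fraction coefficients satisfying $\limsup_{n\to\infty}a_n=1$ (i.e. $a_n=1$ for all sufficiently large $n$). Then for every $\theta\in[0,1)$ and every real $\lambda\neq0$, the operator $H_{\lambda,\alpha,\theta}$ has no eigenvalues.
   Context: $\alpha=[a_1,a_2,\ldots]=1/(a_1+1/(a_2+\cdots))$ with $a_n\in\mathbb N$. $v_{\alpha,\theta}(n)=\chi_{[1-\alpha,1)}(n\alpha+\theta \bmod 1)$ for $n\in\mathbb Z$, and $H_{\lambda,\alpha,\theta}$ acts on $\ell^2(\mathbb Z)$ by $(H_{\lambda,\alpha,\theta}u)(n)=u(n+1)+u(n-1)+\lambda v_{\alpha,\theta}(n)u(n)$. "No eigenvalues" means there is no $E$ and nonzero $u\in\ell^2(\mathbb Z)$ with $H_{\lambda,\alpha,\theta}u=Eu$. *)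

theory Defs
  imports "HOL-Analysis.Analysis"
begin

fun gauss_iter :: "real \<Rightarrow> nat \<Rightarrow> real" where
  "gauss_iter x 0 = x"
| "gauss_iter x (Suc n) = frac (1 / gauss_iter x n)"

text \<open>Continued fraction coefficients: alpha = [a_1, a_2, ...] = 1/(a_1 + 1/(a_2 + ...)),
  with a_(n+1) = floor (1 / x_n). So cf_coeff alpha 1 = a_1, etc.\<close>
definition cf_coeff :: "real \<Rightarrow> nat \<Rightarrow> int" where
  "cf_coeff x n = \<lfloor>1 / gauss_iter x (n - 1)\<rfloor>"

definition sturm_pot :: "real \<Rightarrow> real \<Rightarrow> int \<Rightarrow> real" where
  "sturm_pot \<alpha> \<theta> n = indicator {1 - \<alpha> ..< 1} (frac (of_int n * \<alpha> + \<theta>))"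

text \<open>u is an l^2(Z) eigenvector of H_{lambda,alpha,theta} with eigenvalue E.\<close>
definition is_eigenpair :: "real \<Rightarrow> real \<Rightarrow> real \<Rightarrow> complex \<Rightarrow> (int \<Rightarrow> complex) \<Rightarrow> bool" where
  "is_eigenpair lam \<alpha> \<theta> E u \<longleftrightarrow>
     u \<noteq> (\<lambda>_. 0) \<and>
     (\<lambda>n. (norm (u n))\<^sup>2) summable_on UNIV \<and>
     (\<forall>n. u (n + 1) + u (n - 1) + complex_of_real (lam * sturm_pot \<alpha> \<theta> n) * u n = E * u n)"

definition has_eigenvalue :: "real \<Rightarrow> real \<Rightarrow> real \<Rightarrow> bool" where
  "has_eigenvalue lam \<alpha> \<theta> \<longleftrightarrow> (\<exists>E u. is_eigenpair lam \<alpha> \<theta> E u)"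

end

theory Submission
  imports Defs
begin

datatype m2 = M real real real real

fun mm :: "m2 \<Rightarrow> m2 \<Rightarrow> m2" where
  "mm (M a b c d) (M e f g h) = M (a*e+b*g) (a*f+b*h) (c*e+d*g) (c*f+d*h)"
fun mtr :: "m2 \<Rightarrow> real" where "mtr (M a b c d) = a + d"
fun mdet :: "m2 \<Rightarrow> real" where "mdet (M a b c d) = a*d - b*c"
fun mv :: "m2 \<Rightarrow> real \<times> real \<Rightarrow> real \<times> real" where
  "mv (M a b c d) (x, y) = (a*x+b*y, c*x+d*y)"
definition mI :: m2 where "mI = M 1 0 0 1"

lemma mm_assoc: "mm (mm A B) C = mm A (mm B C)"
  by (cases A; cases B; cases C) (simp add: algebra_simps)
lemma mv_mm: "mv (mm A B) w = mv A (mv B w)"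
  by (cases A; cases B; cases w) (simp add: algebra_simps)
lemma mv_I[simp]: "mv mI w = w" by (cases w) (simp add: mI_def)
lemma mm_I[simp]: "mm A mI = A" "mm mI A = A" by (cases A; simp add: mI_def)+
lemma mdet_mm: "mdet (mm A B) = mdet A * mdet B"
  by (cases A; cases B) (simp add: algebra_simps)
lemma mdet_I[simp]: "mdet mI = 1" by (simp add: mI_def)
lemma mtr_comm: "mtr (mm A B) = mtr (mm B A)"
  by (cases A; cases B) (simp add: algebra_simps)
lemma mtr_ABA: "mtr (mm A (mm B A)) = mtr A * mtr (mm B A) - mdet A * mtr B"
  by (cases A; cases B) (simp add: algebra_simps)
lemma cayley: "mdet A = 1 \<Longrightarrow> mv A (mv A w) = (mtr A * fst (mv A w) - fst w, mtr A * snd (mv A w) - snd w)"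
proof (cases A; cases w)
  fix a b c d x y assume h: "mdet A = 1" "A = M a b c d" "w = (x, y)"
  then have "a*d = 1 + b*c" by simp
  then have e1: "a*(d*x) = x + b*(c*x)" and e2: "a*(d*y) = y + b*(c*y)"
    by (metis (no_types) mult.assoc distrib_right mult_1)+
  show ?thesis using h e1 e2 by (simp add: algebra_simps)
qed

lemma discrete_ivt:
  fixes f :: "int \<Rightarrow> real"
  assumes c: "0 < c" and st: "\<And>j. c \<le> f (j+1) - f j \<and> f (j+1) - f j \<le> L"
  shows "\<exists>j. w \<le> f j \<and> f j < w + L"
proof -
  have up: "f (j0 + int n) \<ge> f j0 + c * real n" for j0 n
  proof (induction n)
    case 0 then show ?case by simp
  next
    case (Suc n)
    have "c \<le> f (j0 + int n + 1) - f (j0 + int n)" using st by blast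
    then show ?case using Suc by (simp add: algebra_simps add.assoc)
  qed
  obtain N :: nat where N: "real N * c > f 0 - w" 
    using reals_Archimedean3[OF c] by blast
  have "f (- int N + int N) \<ge> f (- int N) + c * real N" by (rule up)
  then have j0: "f (- int N) < w" using N by (simp add: algebra_simps)
  obtain M :: nat where M: "real M * c > w - f (- int N)"
    using reals_Archimedean3[OF c] by blast
  have claim: "f (- int N + int n) < w \<or> (\<exists>j. w \<le> f j \<and> f j < w + L)" for n
  proof (induction n)
    case 0 then show ?case using j0 by simp
  next
    case (Suc n)
    show ?case
    proof (cases "f (- int N + int n) < w")
      case True
      have "f (- int N + int n + 1) - f (- int N + int n) \<le> L" using st by blast
      moreover have "- int N + int (Suc n) = (- int N + int n) + 1" by simp
      moreover have "f (- int N + int (Suc n)) = f ((- int N + int n) + 1)" by (rule arg_cong[where f=f]) simp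
      ultimately have "f (- int N + int (Suc n)) < w + L" using True by linarith
      then show ?thesis by (cases "f (- int N + int (Suc n)) < w") (auto intro!: exI[of _ "- int N + int (Suc n)"])
    next
      case False then show ?thesis using Suc by blast
    qed
  qed
  have "f (- int N + int M) \<ge> w" using up[of "- int N" M] M by (simp add: algebra_simps)
  then show ?thesis using claim[of M] by auto
qed

lemma one_le_abs_of_int: "(j::int) \<noteq> 0 \<Longrightarrow> (1::real) \<le> \<bar>of_int j\<bar>"
proof -
  assume "j \<noteq> 0" then have "1 \<le> \<bar>j\<bar>" by linarith
  then have "(1::real) \<le> of_int \<bar>j\<bar>" by (metis of_int_1 of_int_le_iff)
  then show ?thesis by simp
qed

lemma abs_add_pos: "(x::real) * y > 0 \<Longrightarrow> \<bar>x + y\<bar> = \<bar>x\<bar> + \<bar>y\<bar>"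
  by (auto simp: zero_less_mult_iff)

locale gcf =
  fixes \<alpha> :: real and q p :: "nat \<Rightarrow> int" and K :: nat
  assumes a0: "0 < \<alpha>" and a1: "\<alpha> < 1"
  and golden: "\<And>k. K \<le> k \<Longrightarrow> q (k+2) = q (k+1) + q k \<and> p (k+2) = p (k+1) + p k"
  and qpos: "\<And>k. 1 \<le> q k"
  and qmono: "\<And>k. q k \<le> q (Suc k)"
  and dsign: "\<And>k. (of_int (q k) * \<alpha> - of_int (p k)) * (of_int (q (Suc k)) * \<alpha> - of_int (p (Suc k))) < 0"
  and ddec: "\<And>k. \<bar>of_int (q (Suc k)) * \<alpha> - of_int (p (Suc k))\<bar> < \<bar>of_int (q k) * \<alpha> - of_int (p k)\<bar>"
  and d0: "\<bar>of_int (q 0) * \<alpha> - of_int (p 0)\<bar> < 1"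
  and qdet: "\<And>k. \<bar>q (Suc k) * p k - p (Suc k) * q k\<bar> = 1"
begin

definition dl :: "nat \<Rightarrow> real" where "dl k = of_int (q k) * \<alpha> - of_int (p k)"

lemma dl_sign: "dl k * dl (Suc k) < 0" using dsign by (simp add: dl_def)
lemma dl_dec: "\<bar>dl (Suc k)\<bar> < \<bar>dl k\<bar>" using ddec by (simp add: dl_def)
lemma dl_nz: "dl k \<noteq> 0" using dl_sign[of k] by auto
lemma dl_lt1: "\<bar>dl k\<bar> < 1"
proof (induction k)
  case 0 then show ?case using d0 by (simp add: dl_def)
next
  case (Suc k) then show ?case using dl_dec[of k] by linarith
qed
lemma dl_golden: "K \<le> k \<Longrightarrow> dl (k+2) = dl (k+1) + dl k"
  using golden[of k] by (simp add: dl_def algebra_simps)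
lemma dl_golden_abs: "K \<le> k \<Longrightarrow> \<bar>dl k\<bar> = \<bar>dl (k+1)\<bar> + \<bar>dl (k+2)\<bar>"
proof -
  assume "K \<le> k"
  then have e: "dl (k+2) = dl (k+1) + dl k" by (rule dl_golden)
  have s1: "dl k * dl (k+1) < 0" using dl_sign[of k] by simp
  have s2: "dl (k+1) * dl (k+2) < 0" using dl_sign[of "k+1"] by simp
  show ?thesis
  proof (cases "dl k > 0")
    case True
    then have "dl (k+1) < 0" using s1 by (simp add: mult_less_0_iff)
    then have "dl (k+2) > 0" using s2 by (simp add: mult_less_0_iff)
    then show ?thesis using e True \<open>dl (k+1) < 0\<close> by linarith
  next
    case False
    then have "dl k < 0" using dl_nz[of k] by linarith
    then have "dl (k+1) > 0" using s1 by (simp add: mult_less_0_iff)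
    then have "dl (k+2) < 0" using s2 by (simp add: mult_less_0_iff)
    then show ?thesis using e \<open>dl k < 0\<close> \<open>dl (k+1) > 0\<close> by linarith
  qed
qed

lemma q_golden: "K \<le> k \<Longrightarrow> q (k+2) = q (k+1) + q k" using golden by blast
lemma p_golden: "K \<le> k \<Longrightarrow> p (k+2) = p (k+1) + p k" using golden by blast

lemma q_ge: "K \<le> k \<Longrightarrow> int n \<le> q (k + n)"
proof (induction n rule: less_induct)
  case (less n)
  show ?case
  proof (cases n)
    case 0 then show ?thesis using qpos[of k] by simp
  next
    case (Suc n1)
    show ?thesis
    proof (cases n1)
      case 0 then show ?thesis using Suc qpos[of "k+1"] by simp
    next
      case (Suc n2)
      have "q (k + n2 + 2) = q (k+n2+1) + q (k+n2)" using q_golden[of "k+n2"] less.prems by simp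
      moreover have "int n2 \<le> q (k+n2)" using less.IH[of n2] less.prems Suc \<open>n = Suc n1\<close> by simp
      moreover have "1 \<le> q (k+n2+1)" "1 \<le> q (k + n2 + 1)" using qpos by auto
      moreover have "int n1 \<le> q (k + n1)" using less.IH[of n1] less.prems \<open>n = Suc n1\<close> by simp
      ultimately show ?thesis using Suc \<open>n = Suc n1\<close> qpos[of "k+n2"]
        by (simp add: add.assoc)
    qed
  qed
qed

lemma EL:
  assumes kK: "K \<le> k" and m0: "0 < \<bar>m\<bar>" and mq: "\<bar>m\<bar> < q (k+2)"
  shows "\<bar>of_int m * \<alpha> - of_int r\<bar> \<ge> \<bar>dl k\<bar> \<or> (m = q (k+1) \<and> r = p (k+1)) \<or> (m = - q (k+1) \<and> r = - p (k+1))"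
proof -
  define D where "D = q (Suc k) * p k - p (Suc k) * q k"
  have D2: "D * D = 1" using qdet[of k] abs_mult_self_eq[of D] unfolding D_def by simp
  define i where "i = D * (m * p k - r * q k)"
  define j where "j = D * (r * q (k+1) - m * p (k+1))"
  have mi: "m = i * q (k+1) + j * q k"
  proof -
    have "i * q (k+1) + j * q k = D * (m * (q (Suc k) * p k - p (Suc k) * q k))" unfolding i_def j_def by (simp add: algebra_simps)
    also have "\<dots> = (D * D) * m" unfolding D_def by (simp add: algebra_simps)
    also have "\<dots> = m" using D2 by simp
    finally show ?thesis by simp
  qed
  have ri: "r = i * p (k+1) + j * p k"
  proof -
    have "i * p (k+1) + j * p k = D * (r * (q (Suc k) * p k - p (Suc k) * q k))" unfolding i_def j_def by (simp add: algebra_simps)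
    also have "\<dots> = (D * D) * r" unfolding D_def by (simp add: algebra_simps)
    also have "\<dots> = r" using D2 by simp
    finally show ?thesis by simp
  qed
  have val: "of_int m * \<alpha> - of_int r = of_int i * dl (k+1) + of_int j * dl k"
    unfolding dl_def by (subst mi, subst ri) (simp add: algebra_simps)
  have qg: "q (k+2) = q (k+1) + q k" using q_golden[OF kK] .
  have qk1: "1 \<le> q k" "q k \<le> q (k+1)" using qpos[of k] qmono[of k] by auto
  have sgn: "dl k * dl (k+1) < 0" using dl_sign[of k] by simp
  show ?thesis
  proof (cases "i = 0")
    case True
    then have "j \<noteq> 0" using mi m0 by auto
    then have "\<bar>of_int j * dl k\<bar> \<ge> \<bar>dl k\<bar>"
      using one_le_abs_of_int[of j] by (simp add: abs_mult mult_le_cancel_right1)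
    then show ?thesis using val True by simp
  next
    case inz: False
    show ?thesis
    proof (cases "j = 0")
      case True
      then have "\<bar>i\<bar> * q (k+1) < q (k+1) + q k" using mi mq qg qk1 by (simp add: abs_mult)
      then have "\<bar>i\<bar> * q (k+1) < 2 * q (k+1)" using qk1 by linarith
      then have "\<bar>i\<bar> < 2" using qk1 by (simp add: mult_less_cancel_right)
      then have "i = 1 \<or> i = -1" using inz by linarith
      then show ?thesis using True mi ri by auto
    next
      case jnz: False
      show ?thesis
      proof (cases "(i > 0 \<and> j > 0) \<or> (i < 0 \<and> j < 0)")
        case True
        then have "\<bar>m\<bar> \<ge> q (k+1) + q k"
        proof
          assume "i > 0 \<and> j > 0"
          then have "i * q (k+1) \<ge> q (k+1)" "j * q k \<ge> q k" using qk1 by auto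
          then show ?thesis using mi by linarith
        next
          assume "i < 0 \<and> j < 0"
          then have "i \<le> -1" "j \<le> -1" by auto
          then have "i * q (k+1) \<le> (-1) * q (k+1)" "j * q k \<le> (-1) * q k" using qk1
            by (intro mult_right_mono; simp)+
          then show ?thesis using mi by linarith
        qed
        then show ?thesis using mq qg by linarith
      next
        case False
        then have ij: "i * j < 0" using inz jnz by (auto simp: mult_less_0_iff) 
        have prod: "(of_int i * dl (k+1)) * (of_int j * dl k) > 0"
        proof -
          have e: "(of_int i * dl (k+1)) * (of_int j * dl k) = of_int (i*j) * (dl k * dl (k+1))" by (simp add: algebra_simps)
          have n: "(of_int (i*j)::real) < 0" using ij by (simp only: of_int_less_0_iff)
          show ?thesis unfolding e using mult_neg_neg[OF n sgn] .
        qed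
        have "\<bar>of_int i * dl (k+1) + of_int j * dl k\<bar> = \<bar>of_int i * dl (k+1)\<bar> + \<bar>of_int j * dl k\<bar>"
          using abs_add_pos[OF prod] .
        moreover have "\<bar>of_int j * dl k\<bar> \<ge> \<bar>dl k\<bar>" using jnz one_le_abs_of_int[of j] by (simp add: abs_mult mult_le_cancel_right1)
        ultimately have "\<bar>of_int m * \<alpha> - of_int r\<bar> \<ge> \<bar>dl k\<bar>" using val abs_ge_zero[of "of_int i * dl (k+1)"] by simp
        then show ?thesis by blast
      qed
    qed
  qed
qed

end

lemma div_step:
  fixes x b Q :: int
  assumes "0 < Q" "0 \<le> b" "b \<le> Q"
  shows "(x + b) div Q = x div Q \<or> (x + b) div Q = x div Q + 1"
proof -
  have "x div Q \<le> (x + b) div Q" using assms by (intro zdiv_mono1) auto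
  moreover have "(x + b) div Q \<le> (x + Q) div Q" using assms by (intro zdiv_mono1) auto
  moreover have "(x + Q) div Q = x div Q + 1" using assms by simp
  ultimately show ?thesis by linarith
qed

context gcf begin

lemma cover:
  "\<exists>n m. 0 \<le> n \<and> n < q (k+1) \<and> w \<le> of_int n * \<alpha> - of_int m \<and>
     of_int n * \<alpha> - of_int m < w + (\<bar>dl k\<bar> + \<bar>dl (k+1)\<bar>)"
proof -
  define Q where "Q = q (k+1)"
  define a where "a = q k"
  have Q0: "0 < Q" and a0': "0 \<le> a" and aQ: "a \<le> Q" using qpos[of "k+1"] qpos[of k] qmono[of k]
    unfolding Q_def a_def by auto
  define f where "f j = of_int (- ((j*a) div Q)) * dl (k+1) + of_int j * dl k" for j
  have rep: "of_int ((j*a) mod Q) * \<alpha> - of_int (- ((j*a) div Q) * p (k+1) + j * p k) = f j" for j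
  proof -
    have "(j*a) mod Q = j*a - ((j*a) div Q) * Q" by (simp add: minus_div_mult_eq_mod)
    then have h: "real_of_int ((j*a) mod Q) = real_of_int j * real_of_int a - real_of_int ((j*a) div Q) * real_of_int Q"
      by (metis of_int_diff of_int_mult)
    show ?thesis unfolding f_def dl_def h unfolding Q_def a_def by (simp add: algebra_simps)
  qed
  have step: "f (j+1) - f j = dl k \<or> f (j+1) - f j = dl k - dl (k+1)" for j
  proof -
    have "((j*a) + a) div Q = (j*a) div Q \<or> ((j*a) + a) div Q = (j*a) div Q + 1"
      using div_step[OF Q0 a0' aQ] by blast
    moreover have "(j+1)*a = j*a + a" by (simp add: algebra_simps)
    ultimately show ?thesis unfolding f_def by (auto simp: algebra_simps)
  qed
  have sg: "dl k * dl (k+1) < 0" using dl_sign[of k] by simp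
  define L where "L = \<bar>dl k\<bar> + \<bar>dl (k+1)\<bar>"
  have c0: "0 < \<bar>dl k\<bar>" using dl_nz[of k] by simp
  obtain j where j: "w \<le> f j \<and> f j < w + L"
  proof (cases "dl k > 0")
    case True
    then have "dl (k+1) < 0" using sg by (simp add: mult_less_0_iff)
    then have "\<And>j. \<bar>dl k\<bar> \<le> f (j+1) - f j \<and> f (j+1) - f j \<le> L"
      using step True unfolding L_def by (smt (verit))
    from discrete_ivt[where f=f and L=L and w=w, OF c0 this] show ?thesis using that by blast
  next
    case False
    then have dn: "dl k < 0" using dl_nz[of k] by linarith
    then have "dl (k+1) > 0" using sg by (simp add: mult_less_0_iff)
    define g where "g j = f (- j)" for j
    have "\<And>j. \<bar>dl k\<bar> \<le> g (j+1) - g j \<and> g (j+1) - g j \<le> L"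
    proof -
      fix j
      have "f (-j-1+1) - f (-j-1) = dl k \<or> f (-j-1+1) - f (-j-1) = dl k - dl (k+1)" by (rule step)
      moreover have "g (j+1) - g j = - (f (-j-1+1) - f (-j-1))" unfolding g_def by simp
      ultimately show "\<bar>dl k\<bar> \<le> g (j+1) - g j \<and> g (j+1) - g j \<le> L"
        using dn \<open>dl (k+1) > 0\<close> unfolding L_def by (smt (verit))
    qed
    from discrete_ivt[where f=g and L=L and w=w, OF c0 this] obtain j where "w \<le> g j \<and> g j < w + L" by blast
    then show ?thesis using that[of "-j"] unfolding g_def by blast
  qed
  show ?thesis
    apply (rule exI[of _ "(j*a) mod Q"], rule exI[of _ "- ((j*a) div Q) * p (k+1) + j * p k"])
    using j rep[of j] Q0 unfolding L_def Q_def by simp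
qed

definition vat :: "real \<Rightarrow> real" where "vat y = of_int (\<lfloor>y + \<alpha>\<rfloor> - \<lfloor>y\<rfloor>)"

lemma vat_int: "vat (y + of_int z) = vat y"
proof -
  have "y + of_int z + \<alpha> = (y + \<alpha>) + of_int z" by simp
  then show ?thesis unfolding vat_def by (simp only: floor_add_int) simp
qed

lemma Gfloor:
  assumes kK: "K \<le> k" and q2: "2 \<le> q k"
    and ylo: "min (\<alpha> - dl (k+1)) (\<alpha> - dl k) \<le> y" and yhi: "y < max (\<alpha> - dl (k+1)) (\<alpha> - dl k)"
    and m0: "0 \<le> m" and mq: "m \<le> q (k+1)"
  shows "\<lfloor>y + of_int m * \<alpha>\<rfloor> = \<lfloor>\<alpha> + of_int m * \<alpha>\<rfloor>"
proof (rule ccontr)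
  assume ne: "\<lfloor>y + of_int m * \<alpha>\<rfloor> \<noteq> \<lfloor>\<alpha> + of_int m * \<alpha>\<rfloor>"
  have sg: "dl k * dl (k+1) < 0" using dl_sign[of k] by simp
  have dd: "\<bar>dl (k+1)\<bar> < \<bar>dl k\<bar>" using dl_dec[of k] by simp
  have sgn2: "(dl k > 0 \<and> dl (k+1) < 0) \<or> (dl k < 0 \<and> dl (k+1) > 0)" using sg by (auto simp: mult_less_0_iff)
  have m1: "0 < \<bar>m+1\<bar>" "\<bar>m+1\<bar> < q (k+2)" using m0 mq q2 q_golden[OF kK] by auto
  show False
  proof (cases "y < \<alpha>")
    case True
    define r where "r = \<lfloor>\<alpha> + of_int m * \<alpha>\<rfloor>"
    have "\<lfloor>y + of_int m * \<alpha>\<rfloor> \<le> r" unfolding r_def using True by (intro floor_mono) simp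
    then have lt: "\<lfloor>y + of_int m * \<alpha>\<rfloor> < r" using ne unfolding r_def by simp
    then have "y + of_int m * \<alpha> < of_int r" by (meson floor_less_iff)
    moreover have "of_int r \<le> \<alpha> + of_int m * \<alpha>" unfolding r_def by simp
    ultimately have v1: "0 \<le> of_int (m+1) * \<alpha> - of_int r" "of_int (m+1) * \<alpha> - of_int r < \<alpha> - y"
      by (simp_all add: algebra_simps)
    from EL[OF kK m1, of r] show False
    proof (elim disjE conjE)
      assume "\<bar>of_int (m + 1) * \<alpha> - of_int r\<bar> \<ge> \<bar>dl k\<bar>"
      then show False using v1 ylo sgn2 dd by (smt (verit))
    next
      assume "m + 1 = q (k+1)" "r = p (k+1)"
      then have "of_int (m+1) * \<alpha> - of_int r = dl (k+1)" unfolding dl_def by simp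
      then show False using v1 ylo sgn2 dd by (smt (verit))
    next
      assume "m + 1 = - q (k+1)" then show False using m0 qpos[of "k+1"] by simp
    qed
  next
    case False
    then have ya: "\<alpha> < y" using ne by (cases "y = \<alpha>") auto
    define r where "r = \<lfloor>y + of_int m * \<alpha>\<rfloor>"
    have "\<lfloor>\<alpha> + of_int m * \<alpha>\<rfloor> \<le> r" unfolding r_def using ya by (intro floor_mono) simp
    then have lt: "\<lfloor>\<alpha> + of_int m * \<alpha>\<rfloor> < r" using ne unfolding r_def by simp
    then have "\<alpha> + of_int m * \<alpha> < of_int r" by (meson floor_less_iff)
    moreover have "of_int r \<le> y + of_int m * \<alpha>" unfolding r_def by simp
    ultimately have v1: "of_int (m+1) * \<alpha> - of_int r < 0" "\<alpha> - y \<le> of_int (m+1) * \<alpha> - of_int r"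
      by (simp_all add: algebra_simps)
    from EL[OF kK m1, of r] show False
    proof (elim disjE conjE)
      assume "\<bar>of_int (m + 1) * \<alpha> - of_int r\<bar> \<ge> \<bar>dl k\<bar>"
      then show False using v1 yhi sgn2 dd by (smt (verit))
    next
      assume "m + 1 = q (k+1)" "r = p (k+1)"
      then have "of_int (m+1) * \<alpha> - of_int r = dl (k+1)" unfolding dl_def by simp
      then show False using v1 yhi sgn2 dd by (smt (verit))
    next
      assume "m + 1 = - q (k+1)" then show False using m0 qpos[of "k+1"] by simp
    qed
  qed
qed

lemma Gvat:
  assumes kK: "K \<le> k" and q2: "2 \<le> q k"
    and ylo: "min (\<alpha> - dl (k+1)) (\<alpha> - dl k) \<le> y" and yhi: "y < max (\<alpha> - dl (k+1)) (\<alpha> - dl k)"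
    and i0: "0 \<le> i" and iq: "i < q (k+1)"
  shows "vat (y + of_int i * \<alpha>) = vat (\<alpha> + of_int i * \<alpha>)"
proof -
  have a: "\<lfloor>y + of_int i * \<alpha>\<rfloor> = \<lfloor>\<alpha> + of_int i * \<alpha>\<rfloor>" using Gfloor[OF kK q2 ylo yhi, of i] i0 iq by simp
  have b: "\<lfloor>y + of_int (i+1) * \<alpha>\<rfloor> = \<lfloor>\<alpha> + of_int (i+1) * \<alpha>\<rfloor>" using Gfloor[OF kK q2 ylo yhi, of "i+1"] i0 iq by simp
  have c: "y + of_int i * \<alpha> + \<alpha> = y + of_int (i+1) * \<alpha>" "\<alpha> + of_int i * \<alpha> + \<alpha> = \<alpha> + of_int (i+1) * \<alpha>"
    by (simp_all add: algebra_simps)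
  show ?thesis unfolding vat_def c a b ..
qed

end

definition Tm :: "real \<Rightarrow> real \<Rightarrow> real \<Rightarrow> m2" where "Tm E lam s = M (E - lam * s) (-1) 1 0"

lemma mdet_Tm[simp]: "mdet (Tm E lam s) = 1" by (simp add: Tm_def)

context gcf begin

fun W :: "real \<Rightarrow> real \<Rightarrow> real \<Rightarrow> nat \<Rightarrow> m2" where
  "W E lam y 0 = mI"
| "W E lam y (Suc l) = mm (Tm E lam (vat (y + real l * \<alpha>))) (W E lam y l)"

lemma W_add: "W E lam y (l1 + l2) = mm (W E lam (y + real l1 * \<alpha>) l2) (W E lam y l1)"
proof (induction l2)
  case 0 then show ?case by simp
next
  case (Suc l2)
  have e: "y + real (l1 + l2) * \<alpha> = y + real l1 * \<alpha> + real l2 * \<alpha>" by (simp add: algebra_simps)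
  show ?case by (simp only: add_Suc_right W.simps Suc.IH e mm_assoc)
qed

lemma W_int: "W E lam (y + of_int z) l = W E lam y l"
proof (induction l)
  case 0 then show ?case by simp
next
  case (Suc l)
  have e: "y + of_int z + real l * \<alpha> = (y + real l * \<alpha>) + of_int z" by simp
  have "vat (y + of_int z + real l * \<alpha>) = vat (y + real l * \<alpha>)" by (subst e) (rule vat_int)
  then show ?case using Suc by simp
qed

lemma W_det: "mdet (W E lam y l) = 1"
  by (induction l) (simp_all add: mdet_mm)

lemma W_cong: "(\<And>i. i < l \<Longrightarrow> vat (y + real i * \<alpha>) = vat (y' + real i * \<alpha>)) \<Longrightarrow> W E lam y l = W E lam y' l"
  by (induction l) auto

lemma W_left: "W E lam y (Suc l) = mm (W E lam (y + \<alpha>) l) (Tm E lam (vat y))"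
  using W_add[of E lam y 1 l] by simp

lemma W_trace_shift:
  assumes "vat (y + real (Suc l) * \<alpha>) = vat y"
  shows "mtr (W E lam (y + \<alpha>) (Suc l)) = mtr (W E lam y (Suc l))"
proof -
  have e: "y + \<alpha> + real l * \<alpha> = y + real (Suc l) * \<alpha>" by (simp add: algebra_simps)
  have "W E lam (y + \<alpha>) (Suc l) = mm (Tm E lam (vat (y + \<alpha> + real l * \<alpha>))) (W E lam (y + \<alpha>) l)" by simp
  also have "\<dots> = mm (Tm E lam (vat y)) (W E lam (y + \<alpha>) l)" unfolding e assms ..
  finally have "W E lam (y + \<alpha>) (Suc l) = mm (Tm E lam (vat y)) (W E lam (y + \<alpha>) l)" .
  then show ?thesis using W_left[of E lam y l] mtr_comm by simp
qed

definition S :: "real \<Rightarrow> real \<Rightarrow> nat \<Rightarrow> m2" where "S E lam k = W E lam \<alpha> (nat (q k))"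
definition xt :: "real \<Rightarrow> real \<Rightarrow> nat \<Rightarrow> real" where "xt E lam k = mtr (S E lam k)"

lemma G_W:
  assumes kK: "K \<le> k" and q2: "2 \<le> q k"
    and ylo: "min (\<alpha> - dl (k+1)) (\<alpha> - dl k) \<le> y" and yhi: "y < max (\<alpha> - dl (k+1)) (\<alpha> - dl k)"
  shows "W E lam y (nat (q (k+1))) = S E lam (k+1)"
  unfolding S_def
proof (rule W_cong)
  fix i assume "i < nat (q (k+1))"
  then have "0 \<le> int i" "int i < q (k+1)" by auto
  from Gvat[OF kK q2 ylo yhi this] show "vat (y + real i * \<alpha>) = vat (\<alpha> + real i * \<alpha>)" by simp
qed

lemma q2_mono: "2 \<le> q k \<Longrightarrow> k \<le> k' \<Longrightarrow> 2 \<le> q k'"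
  using qmono by (metis order_trans lift_Suc_mono_le)

lemma S_rec:
  assumes kK: "K \<le> k" and q2: "2 \<le> q k"
  shows "S E lam (k+3) = mm (S E lam (k+1)) (S E lam (k+2))"
proof -
  have kK1: "K \<le> k+1" using kK by simp
  have qq: "q (k+3) = q (k+2) + q (k+1)" using q_golden[OF kK1] by (simp add: numeral_eq_Suc)
  have pp: "p (k+3) = p (k+2) + p (k+1)" using p_golden[OF kK1] by (simp add: numeral_eq_Suc)
  have np: "nat (q (k+3)) = nat (q (k+2)) + nat (q (k+1))" using qq qpos[of "k+1"] qpos[of "k+2"] by simp
  have "S E lam (k+3) = mm (W E lam (\<alpha> + real (nat (q (k+2))) * \<alpha>) (nat (q (k+1)))) (S E lam (k+2))"
    unfolding S_def np by (rule W_add)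
  moreover have "\<alpha> + real (nat (q (k+2))) * \<alpha> = (\<alpha> + dl (k+2)) + of_int (p (k+2))"
    using qpos[of "k+2"] unfolding dl_def by simp
  moreover have "W E lam (\<alpha> + dl (k+2)) (nat (q (k+1))) = S E lam (k+1)"
  proof (rule G_W[OF kK q2])
    have sg1: "dl k * dl (k+1) < 0" using dl_sign[of k] by simp
    have sg2: "dl (k+1) * dl (k+2) < 0" using dl_sign[of "k+1"] by simp
    have dd: "\<bar>dl (k+2)\<bar> < \<bar>dl (k+1)\<bar>" using dl_dec[of "k+1"] by simp
    have s1: "(dl k > 0 \<and> dl (k+1) < 0) \<or> (dl k < 0 \<and> dl (k+1) > 0)" using sg1 by (auto simp: mult_less_0_iff)
    have s2: "(dl (k+1) > 0 \<and> dl (k+2) < 0) \<or> (dl (k+1) < 0 \<and> dl (k+2) > 0)" using sg2 by (auto simp: mult_less_0_iff)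
    show "min (\<alpha> - dl (k+1)) (\<alpha> - dl k) \<le> \<alpha> + dl (k+2)" using s1 s2 dd by (smt (verit))
    show "\<alpha> + dl (k+2) < max (\<alpha> - dl (k+1)) (\<alpha> - dl k)" using s1 s2 dd by (smt (verit))
  qed
  ultimately show ?thesis using W_int[of E lam "\<alpha> + dl (k+2)" "p (k+2)" "nat (q (k+1))"] by (simp add: add.assoc)
qed

lemma x_rec:
  assumes kK: "K \<le> k" and q2: "2 \<le> q k"
  shows "xt E lam (k+4) = xt E lam (k+2) * xt E lam (k+3) - xt E lam (k+1)"
proof -
  have a: "S E lam (k+4) = mm (S E lam (k+2)) (S E lam (k+3))"
    using S_rec[of "k+1" E lam] kK q2_mono[OF q2, of "k+1"] by (simp add: numeral_eq_Suc)
  have b: "S E lam (k+3) = mm (S E lam (k+1)) (S E lam (k+2))" using S_rec[OF kK q2] .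
  have "xt E lam (k+4) = mtr (mm (S E lam (k+2)) (mm (S E lam (k+1)) (S E lam (k+2))))"
    unfolding xt_def a b ..
  also have "\<dots> = xt E lam (k+2) * xt E lam (k+3) - xt E lam (k+1)"
    unfolding mtr_ABA xt_def b using W_det unfolding S_def by simp
  finally show ?thesis .
qed

lemma inv_step0: "b\<^sup>2 + c\<^sup>2 + (b * c - a)\<^sup>2 - b * c * (b * c - a) = (a::real)\<^sup>2 + b\<^sup>2 + c\<^sup>2 - a * b * c"
  by (simp add: power2_eq_square algebra_simps)
lemma inv_step: "(d::real) = b * c - a \<Longrightarrow> b\<^sup>2 + c\<^sup>2 + d\<^sup>2 - b * c * d = a\<^sup>2 + b\<^sup>2 + c\<^sup>2 - a * b * c"
  using inv_step0 by simp

definition Iv :: "real \<Rightarrow> real \<Rightarrow> nat \<Rightarrow> real" where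
  "Iv E lam j = (xt E lam j)\<^sup>2 + (xt E lam (j+1))\<^sup>2 + (xt E lam (j+2))\<^sup>2 - xt E lam j * xt E lam (j+1) * xt E lam (j+2)"

lemma q_K2: "2 \<le> q (K+2)" using q_ge[of K 2] by simp

lemma Iv_const: "Iv E lam (K + 3 + n) = Iv E lam (K + 3)"
proof (induction n)
  case 0 then show ?case by simp
next
  case (Suc n)
  define k where "k = K + 2 + n"
  have kK: "K \<le> k" unfolding k_def by simp
  have q2: "2 \<le> q k" using q2_mono[OF q_K2] unfolding k_def by simp
  have r: "xt E lam (k+4) = xt E lam (k+2) * xt E lam (k+3) - xt E lam (k+1)" by (rule x_rec[OF kK q2])
  have "Iv E lam (k+2) = Iv E lam (k+1)"
    unfolding Iv_def using inv_step[OF r] by (simp add: numeral_eq_Suc)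
  then show ?case using Suc unfolding k_def by (simp add: add.assoc numeral_eq_Suc)
qed

end

context gcf begin

definition Tt :: "real \<Rightarrow> nat \<Rightarrow> int \<Rightarrow> bool" where
  "Tt \<theta> k n \<longleftrightarrow> \<lfloor>of_int n * \<alpha> + \<theta> + dl k\<rfloor> \<noteq> \<lfloor>of_int n * \<alpha> + \<theta>\<rfloor>"

lemma per_of_T:
  assumes "\<not> Tt \<theta> k n" "\<not> Tt \<theta> k (n+1)"
  shows "vat (of_int (n + q k) * \<alpha> + \<theta>) = vat (of_int n * \<alpha> + \<theta>)"
proof -
  define z where "z = of_int n * \<alpha> + \<theta>"
  have e1: "of_int (n + q k) * \<alpha> + \<theta> = (z + dl k) + of_int (p k)" unfolding z_def dl_def by (simp add: algebra_simps)
  have f1: "\<lfloor>z + dl k\<rfloor> = \<lfloor>z\<rfloor>" using assms(1) unfolding Tt_def z_def by simp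
  have e2: "z + dl k + \<alpha> = (of_int (n+1) * \<alpha> + \<theta>) + dl k" "z + \<alpha> = of_int (n+1) * \<alpha> + \<theta>"
    unfolding z_def by (simp_all add: algebra_simps)
  have f2: "\<lfloor>z + dl k + \<alpha>\<rfloor> = \<lfloor>z + \<alpha>\<rfloor>" using assms(2) unfolding Tt_def e2 by simp
  have "vat (of_int (n + q k) * \<alpha> + \<theta>) = vat (z + dl k)" unfolding e1 by (rule vat_int)
  also have "\<dots> = vat z" unfolding vat_def f1 f2 ..
  finally show ?thesis unfolding z_def .
qed

definition near :: "nat \<Rightarrow> real \<Rightarrow> int \<Rightarrow> bool" where
  "near k z r \<longleftrightarrow> (dl k > 0 \<and> - dl k \<le> z - of_int r \<and> z - of_int r < 0) \<or> (dl k < 0 \<and> 0 \<le> z - of_int r \<and> z - of_int r < - dl k)"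

lemma T_near: assumes "Tt \<theta> k n" shows "\<exists>r. near k (of_int n * \<alpha> + \<theta>) r"
proof -
  define z where "z = of_int n * \<alpha> + \<theta>"
  have ne: "\<lfloor>z + dl k\<rfloor> \<noteq> \<lfloor>z\<rfloor>" using assms unfolding Tt_def z_def by simp
  show ?thesis
  proof (cases "dl k > 0")
    case True
    then have "\<lfloor>z\<rfloor> \<le> \<lfloor>z + dl k\<rfloor>" by (intro floor_mono) simp
    then have "\<lfloor>z\<rfloor> < \<lfloor>z + dl k\<rfloor>" using ne by simp
    then have "z < of_int \<lfloor>z + dl k\<rfloor>" by (meson floor_less_iff)
    moreover have "- dl k \<le> z - of_int \<lfloor>z + dl k\<rfloor>" using of_int_floor_le[of "z + dl k"] by linarith
    ultimately have "near k z \<lfloor>z + dl k\<rfloor>" unfolding near_def using True by simp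
    then show ?thesis unfolding z_def by blast
  next
    case False
    then have dn: "dl k < 0" using dl_nz[of k] by linarith
    then have "\<lfloor>z + dl k\<rfloor> \<le> \<lfloor>z\<rfloor>" by (intro floor_mono) simp
    then have "\<lfloor>z + dl k\<rfloor> < \<lfloor>z\<rfloor>" using ne by simp
    then have "z + dl k < of_int \<lfloor>z\<rfloor>" by (meson floor_less_iff)
    moreover have "0 \<le> z - of_int \<lfloor>z\<rfloor>" using of_int_floor_le[of z] by linarith
    ultimately have "near k z \<lfloor>z\<rfloor>" unfolding near_def using dn by simp
    then show ?thesis unfolding z_def by blast
  qed
qed

lemma near_diff:
  assumes "near k z r" "near k z' r'"
  shows "\<bar>(z' - of_int r') - (z - of_int r)\<bar> < \<bar>dl k\<bar>"
  using assms unfolding near_def by auto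

lemma spacing:
  assumes kK: "K \<le> k" and t1: "Tt \<theta> (k+1) n" and t2: "Tt \<theta> (k+1) n'" and lt: "n < n'"
  shows "q (k+2) \<le> n' - n"
proof (rule ccontr)
  assume "\<not> q (k+2) \<le> n' - n"
  then have m: "0 < \<bar>n' - n\<bar>" "\<bar>n' - n\<bar> < q (k+2)" using lt by auto
  obtain r where r: "near (k+1) (of_int n * \<alpha> + \<theta>) r" using T_near[OF t1] by blast
  obtain r' where r': "near (k+1) (of_int n' * \<alpha> + \<theta>) r'" using T_near[OF t2] by blast
  have v: "of_int (n' - n) * \<alpha> - of_int (r' - r) = (of_int n' * \<alpha> + \<theta> - of_int r') - (of_int n * \<alpha> + \<theta> - of_int r)"
    by (simp add: algebra_simps)
  have lt1: "\<bar>of_int (n' - n) * \<alpha> - of_int (r' - r)\<bar> < \<bar>dl (k+1)\<bar>" unfolding v using near_diff[OF r r'] .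
  have dd: "\<bar>dl (k+1)\<bar> < \<bar>dl k\<bar>" using dl_dec[of k] by simp
  from EL[OF kK m, of "r' - r"] show False
  proof (elim disjE conjE)
    assume "\<bar>dl k\<bar> \<le> \<bar>of_int (n' - n) * \<alpha> - of_int (r' - r)\<bar>" then show False using lt1 dd by linarith
  next
    assume "n' - n = q (k+1)" "r' - r = p (k+1)"
    then have "of_int (n' - n) * \<alpha> - of_int (r' - r) = dl (k+1)" unfolding dl_def by simp
    then show False using lt1 by simp
  next
    assume "n' - n = - q (k+1)" "r' - r = - p (k+1)"
    then have "of_int (n' - n) * \<alpha> - of_int (r' - r) = - dl (k+1)" unfolding dl_def by simp
    then show False using lt1 by simp
  qed
qed

lemma close_eq:
  assumes kK: "K \<le> k" and t1: "Tt \<theta> (k+1) a" and t2: "Tt \<theta> (k+1) b" and cl: "\<bar>a - b\<bar> < q (k+2)"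
  shows "a = b"
proof (cases a b rule: linorder_cases)
  case less then show ?thesis using spacing[OF kK t1 t2] cl by simp
next
  case greater then show ?thesis using spacing[OF kK t2 t1] cl by simp
qed simp

lemma pair:
  assumes kK: "K \<le> k" and t1: "Tt \<theta> (k+1) t" and t2: "Tt \<theta> (k+2) t'" and cl: "\<bar>t' - t\<bar> < q (k+2)"
  shows "t' = t + q (k+1)"
proof -
  obtain r where r: "near (k+1) (of_int t * \<alpha> + \<theta>) r" using T_near[OF t1] by blast
  obtain r' where r': "near (k+2) (of_int t' * \<alpha> + \<theta>) r'" using T_near[OF t2] by blast
  define v where "v = of_int (t' - t) * \<alpha> - of_int (r' - r)"
  have v: "v = (of_int t' * \<alpha> + \<theta> - of_int r') - (of_int t * \<alpha> + \<theta> - of_int r)"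
    unfolding v_def by (simp add: algebra_simps)
  have ga: "\<bar>dl k\<bar> = \<bar>dl (k+1)\<bar> + \<bar>dl (k+2)\<bar>" using dl_golden_abs[OF kK] .
  have sg: "dl (k+1) * dl (k+2) < 0" using dl_sign[of "k+1"] by simp
  have s2: "(dl (k+1) > 0 \<and> dl (k+2) < 0) \<or> (dl (k+1) < 0 \<and> dl (k+2) > 0)" using sg by (auto simp: mult_less_0_iff)
  have vb: "(dl (k+1) > 0 \<and> 0 < v \<and> v < \<bar>dl k\<bar>) \<or> (dl (k+1) < 0 \<and> v < 0 \<and> - v < \<bar>dl k\<bar>)"
    using r r' s2 ga unfolding near_def v by auto
  have lt1: "\<bar>dl k\<bar> < 1" using dl_lt1 .
  show ?thesis
  proof (cases "t' - t = 0")
    case True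
    then have "v = - of_int (r' - r)" unfolding v_def by simp
    moreover have "\<bar>v\<bar> < 1" "v \<noteq> 0" using vb lt1 by auto
    ultimately have "\<bar>of_int (r' - r)\<bar> < (1::real)" "of_int (r' - r) \<noteq> (0::real)" by auto
    then have "\<bar>r' - r\<bar> < 1" "r' - r \<noteq> 0" by linarith+
    then show ?thesis by linarith
  next
    case False
    then have m: "0 < \<bar>t' - t\<bar>" "\<bar>t' - t\<bar> < q (k+2)" using cl by auto
    from EL[OF kK m, of "r' - r"] show ?thesis
    proof (elim disjE conjE)
      assume "\<bar>dl k\<bar> \<le> \<bar>of_int (t' - t) * \<alpha> - of_int (r' - r)\<bar>"
      then show ?thesis using vb unfolding v_def by linarith
    next
      assume "t' - t = q (k+1)" then show ?thesis by simp
    next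
      assume "t' - t = - q (k+1)" "r' - r = - p (k+1)"
      then have "v = - dl (k+1)" unfolding v_def dl_def by simp
      then show ?thesis using vb by linarith
    qed
  qed
qed

definition hasM :: "real \<Rightarrow> nat \<Rightarrow> int \<Rightarrow> bool" where
  "hasM \<theta> k c \<longleftrightarrow> (\<forall>n. c - q k \<le> n \<and> n \<le> c \<longrightarrow> \<not> Tt \<theta> k n)"
definition hasR :: "real \<Rightarrow> nat \<Rightarrow> int \<Rightarrow> bool" where
  "hasR \<theta> k c \<longleftrightarrow> (\<forall>n. c \<le> n \<and> n \<le> c + q k \<longrightarrow> \<not> Tt \<theta> k n)"

lemma noM:
  assumes kK: "K \<le> k" and q3: "3 \<le> q k"
    and h: "\<not> hasM \<theta> (k+1) (-1)" "\<not> hasM \<theta> (k+1) 0" "\<not> hasM \<theta> (k+1) 1"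
  shows "\<exists>t. Tt \<theta> (k+1) t \<and> 1 - q (k+1) \<le> t \<and> t \<le> -1"
proof -
  obtain a where a: "Tt \<theta> (k+1) a" "-1 - q (k+1) \<le> a" "a \<le> -1" using h(1) unfolding hasM_def by auto
  obtain b where b: "Tt \<theta> (k+1) b" "- q (k+1) \<le> b" "b \<le> 0" using h(2) unfolding hasM_def by auto
  obtain c where c: "Tt \<theta> (k+1) c" "1 - q (k+1) \<le> c" "c \<le> 1" using h(3) unfolding hasM_def by auto
  have qq: "q (k+2) = q (k+1) + q k" using q_golden[OF kK] .
  have "a = b" using close_eq[OF kK a(1) b(1)] a b qq q3 by simp
  moreover have "a = c" using close_eq[OF kK a(1) c(1)] a c qq q3 by simp
  ultimately show ?thesis using a b c by auto
qed

lemma noR: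
  assumes kK: "K \<le> k" and q3: "3 \<le> q k"
    and h: "\<not> hasR \<theta> (k+1) (-1)" "\<not> hasR \<theta> (k+1) 0" "\<not> hasR \<theta> (k+1) 1"
  shows "\<exists>t. Tt \<theta> (k+1) t \<and> 1 \<le> t \<and> t \<le> q (k+1) - 1"
proof -
  obtain a where a: "Tt \<theta> (k+1) a" "-1 \<le> a" "a \<le> -1 + q (k+1)" using h(1) unfolding hasR_def by auto
  obtain b where b: "Tt \<theta> (k+1) b" "0 \<le> b" "b \<le> q (k+1)" using h(2) unfolding hasR_def by auto
  obtain c where c: "Tt \<theta> (k+1) c" "1 \<le> c" "c \<le> 1 + q (k+1)" using h(3) unfolding hasR_def by auto
  have qq: "q (k+2) = q (k+1) + q k" using q_golden[OF kK] .
  have "a = b" using close_eq[OF kK a(1) b(1)] a b qq q3 by simp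
  moreover have "a = c" using close_eq[OF kK a(1) c(1)] a c qq q3 by simp
  ultimately show ?thesis using a b c by auto
qed

lemma q3_mono: "3 \<le> q k \<Longrightarrow> k \<le> k' \<Longrightarrow> 3 \<le> q k'"
  using qmono by (metis order_trans lift_Suc_mono_le)

lemma claimM:
  assumes kK: "K \<le> k" and q3: "3 \<le> q k"
  shows "hasM \<theta> (k+1) (-1) \<or> hasM \<theta> (k+1) 0 \<or> hasM \<theta> (k+1) 1 \<or>
         hasM \<theta> (k+2) (-1) \<or> hasM \<theta> (k+2) 0 \<or> hasM \<theta> (k+2) 1"
proof (rule ccontr)
  assume "\<not> ?thesis"
  then have h1: "\<not> hasM \<theta> (k+1) (-1)" "\<not> hasM \<theta> (k+1) 0" "\<not> hasM \<theta> (k+1) 1"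
    and h2: "\<not> hasM \<theta> ((k+1)+1) (-1)" "\<not> hasM \<theta> ((k+1)+1) 0" "\<not> hasM \<theta> ((k+1)+1) 1" by auto
  obtain t where t: "Tt \<theta> (k+1) t" "1 - q (k+1) \<le> t" "t \<le> -1" using noM[OF kK q3 h1] by blast
  have kK1: "K \<le> k+1" using kK by simp
  have q31: "3 \<le> q (k+1)" using q3_mono[OF q3] by simp
  obtain t' where t': "Tt \<theta> (k+2) t'" "1 - q (k+2) \<le> t'" "t' \<le> -1"
    using noM[OF kK1 q31 h2] by (auto simp: numeral_eq_Suc)
  have qm: "q (k+1) \<le> q (k+2)" using qmono[of "k+1"] by (simp add: numeral_eq_Suc)
  have "\<bar>t' - t\<bar> < q (k+2)" using t t' qm by (auto simp: abs_less_iff)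
  then have "t' = t + q (k+1)" using pair[OF kK t(1) t'(1)] by simp
  then show False using t t' by simp
qed

lemma claimR:
  assumes kK: "K \<le> k" and q3: "3 \<le> q k"
  shows "hasR \<theta> (k+1) (-1) \<or> hasR \<theta> (k+1) 0 \<or> hasR \<theta> (k+1) 1 \<or>
         hasR \<theta> (k+2) (-1) \<or> hasR \<theta> (k+2) 0 \<or> hasR \<theta> (k+2) 1 \<or>
         hasR \<theta> (k+3) (-1) \<or> hasR \<theta> (k+3) 0 \<or> hasR \<theta> (k+3) 1"
proof (rule ccontr)
  assume "\<not> ?thesis"
  then have h1: "\<not> hasR \<theta> (k+1) (-1)" "\<not> hasR \<theta> (k+1) 0" "\<not> hasR \<theta> (k+1) 1"
    and h2: "\<not> hasR \<theta> ((k+1)+1) (-1)" "\<not> hasR \<theta> ((k+1)+1) 0" "\<not> hasR \<theta> ((k+1)+1) 1"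
    and h3: "\<not> hasR \<theta> ((k+2)+1) (-1)" "\<not> hasR \<theta> ((k+2)+1) 0" "\<not> hasR \<theta> ((k+2)+1) 1"
    by (auto simp: numeral_eq_Suc)
  have kK1: "K \<le> k+1" and kK2: "K \<le> k+2" using kK by simp_all
  have q31: "3 \<le> q (k+1)" and q32: "3 \<le> q (k+2)" using q3_mono[OF q3] by simp_all
  obtain a1 where a1: "Tt \<theta> (k+1) a1" "1 \<le> a1" "a1 \<le> q (k+1) - 1" using noR[OF kK q3 h1] by blast
  obtain a2 where a2: "Tt \<theta> (k+2) a2" "1 \<le> a2" "a2 \<le> q (k+2) - 1"
    using noR[OF kK1 q31 h2] by (auto simp: numeral_eq_Suc)
  obtain a3 where a3: "Tt \<theta> (k+3) a3" "1 \<le> a3" "a3 \<le> q (k+3) - 1"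
    using noR[OF kK2 q32 h3] by (auto simp: numeral_eq_Suc)
  have qm: "q (k+1) \<le> q (k+2)" "q (k+2) \<le> q (k+3)" using qmono[of "k+1"] qmono[of "k+2"] by (simp_all add: numeral_eq_Suc)
  have "\<bar>a2 - a1\<bar> < q (k+2)" using a1 a2 qm by (auto simp: abs_less_iff)
  then have e1: "a2 = a1 + q (k+1)" using pair[OF kK a1(1) a2(1)] by simp
  have a2': "Tt \<theta> ((k+1)+1) a2" using a2(1) by (simp add: numeral_eq_Suc)
  have a3': "Tt \<theta> ((k+1)+2) a3" using a3(1) by (simp add: numeral_eq_Suc)
  have "\<bar>a3 - a2\<bar> < q ((k+1)+2)" using a2 a3 qm by (auto simp: abs_less_iff numeral_eq_Suc)
  then have e2: "a3 = a2 + q ((k+1)+1)" using pair[OF kK1 a2' a3'] by simp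
  have "q (k+3) = q (k+2) + q (k+1)" using q_golden[OF kK1] by (simp add: numeral_eq_Suc)
  then show False using e1 e2 a1 a3 by (simp add: numeral_eq_Suc)
qed

end

definition nrm :: "real \<times> real \<Rightarrow> real" where "nrm w = \<bar>fst w\<bar> + \<bar>snd w\<bar>"

context gcf begin

definition Phi :: "(int \<Rightarrow> real) \<Rightarrow> int \<Rightarrow> real \<times> real" where "Phi u n = (u n, u (n - 1))"

lemma Phi_W:
  assumes eq: "\<And>n. u (n+1) + u (n-1) + lam * vat (of_int n * \<alpha> + \<theta>) * u n = E * u n"
  shows "Phi u (a + int l) = mv (W E lam (of_int a * \<alpha> + \<theta>) l) (Phi u a)"
proof (induction l)
  case 0 then show ?case by (simp add: Phi_def mI_def)
next
  case (Suc l)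
  have e: "of_int a * \<alpha> + \<theta> + real l * \<alpha> = of_int (a + int l) * \<alpha> + \<theta>" by (simp add: algebra_simps)
  have "mv (W E lam (of_int a * \<alpha> + \<theta>) (Suc l)) (Phi u a) =
        mv (Tm E lam (vat (of_int (a + int l) * \<alpha> + \<theta>))) (Phi u (a + int l))"
    using Suc by (simp add: mv_mm e)
  also have "\<dots> = Phi u (a + int l + 1)"
    using eq[of "a + int l"] by (simp add: Phi_def Tm_def algebra_simps)
  finally have r: "mv (W E lam (of_int a * \<alpha> + \<theta>) (Suc l)) (Phi u a) = Phi u (a + int l + 1)" .
  have e: "a + int (Suc l) = a + int l + 1" by simp
  show ?case unfolding e using r[symmetric] .
qed

lemma main_trace:
  assumes kK: "K \<le> k" and q2: "2 \<le> q k"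
    and per: "\<And>i. 0 \<le> i \<Longrightarrow> i < q (k+1) \<Longrightarrow> vat (of_int (a + i) * \<alpha> + \<theta>) = vat (of_int (a + i + q (k+1)) * \<alpha> + \<theta>)"
  shows "mtr (W E lam (of_int a * \<alpha> + \<theta>) (nat (q (k+1)))) = xt E lam (k+1)"
proof -
  define Q where "Q = nat (q (k+1))"
  have Q1: "1 \<le> Q" using qpos[of "k+1"] unfolding Q_def by simp
  obtain l' where l': "Q = Suc l'" using Q1 by (cases Q) auto
  have QQ: "int Q = q (k+1)" using qpos[of "k+1"] unfolding Q_def by simp
  have QR: "real_of_int (q (k+1)) = real (Suc l')" using QQ l' by (metis of_int_of_nat_eq)
  have inv: "j \<le> Q \<Longrightarrow> mtr (W E lam (of_int (a + int j) * \<alpha> + \<theta>) Q) = mtr (W E lam (of_int a * \<alpha> + \<theta>) Q)" for j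
  proof (induction j)
    case 0 then show ?case by simp
  next
    case (Suc j)
    define y where "y = of_int (a + int j) * \<alpha> + \<theta>"
    have y1: "of_int (a + int (Suc j)) * \<alpha> + \<theta> = y + \<alpha>" unfolding y_def by (simp add: algebra_simps)
    have "vat (of_int (a + int j) * \<alpha> + \<theta>) = vat (of_int (a + int j + q (k+1)) * \<alpha> + \<theta>)"
      using per[of "int j"] Suc.prems QQ by simp
    moreover have "of_int (a + int j + q (k+1)) * \<alpha> + \<theta> = y + real (Suc l') * \<alpha>"
      unfolding y_def using QR by (simp add: algebra_simps)
    ultimately have "vat (y + real (Suc l') * \<alpha>) = vat y" unfolding y_def by (simp add: ac_simps)
    from W_trace_shift[OF this, of E lam] have sh: "mtr (W E lam (y + \<alpha>) Q) = mtr (W E lam y Q)" using l' by simp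
    have ih: "mtr (W E lam y Q) = mtr (W E lam (of_int a * \<alpha> + \<theta>) Q)" using Suc.IH Suc.prems unfolding y_def by simp
    have "mtr (W E lam (of_int (a + int (Suc j)) * \<alpha> + \<theta>) Q) = mtr (W E lam (y + \<alpha>) Q)" unfolding y1 ..
    also have "\<dots> = mtr (W E lam y Q)" by (rule sh)
    also have "\<dots> = mtr (W E lam (of_int a * \<alpha> + \<theta>) Q)" by (rule ih)
    finally show ?case .
  qed
  define lo where "lo = min (\<alpha> - dl (k+1)) (\<alpha> - dl k)"
  define hi where "hi = max (\<alpha> - dl (k+1)) (\<alpha> - dl k)"
  have sg: "dl k * dl (k+1) < 0" using dl_sign[of k] by simp
  have s1: "(dl k > 0 \<and> dl (k+1) < 0) \<or> (dl k < 0 \<and> dl (k+1) > 0)" using sg by (auto simp: mult_less_0_iff)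
  have hl: "hi = lo + (\<bar>dl k\<bar> + \<bar>dl (k+1)\<bar>)" unfolding hi_def lo_def using s1 by auto
  obtain n m where nm: "0 \<le> n" "n < q (k+1)" "lo - (of_int a * \<alpha> + \<theta>) \<le> of_int n * \<alpha> - of_int m"
     "of_int n * \<alpha> - of_int m < lo - (of_int a * \<alpha> + \<theta>) + (\<bar>dl k\<bar> + \<bar>dl (k+1)\<bar>)"
    using cover[of k "lo - (of_int a * \<alpha> + \<theta>)"] by blast
  define y where "y = of_int (a + n) * \<alpha> + \<theta> - of_int m"
  have ylo: "lo \<le> y" and yhi: "y < hi" using nm hl unfolding y_def by (simp_all add: algebra_simps)
  have "W E lam y Q = S E lam (k+1)" unfolding Q_def
    using G_W[OF kK q2, of y] ylo yhi unfolding lo_def hi_def by simp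
  moreover have "W E lam (of_int (a + n) * \<alpha> + \<theta>) Q = W E lam y Q"
    using W_int[of E lam y m Q] unfolding y_def by simp
  moreover have "mtr (W E lam (of_int (a + int (nat n)) * \<alpha> + \<theta>) Q) = mtr (W E lam (of_int a * \<alpha> + \<theta>) Q)"
    using inv[of "nat n"] nm QQ by simp
  ultimately show ?thesis using nm(1) unfolding xt_def Q_def by simp
qed

lemma gordonM:
  assumes eq: "\<And>n. u (n+1) + u (n-1) + lam * vat (of_int n * \<alpha> + \<theta>) * u n = E * u n"
    and kK: "K \<le> k" and q2: "2 \<le> q k" and hM: "hasM \<theta> (k+1) c"
  shows "\<bar>xt E lam (k+1)\<bar> * nrm (Phi u c) \<le> nrm (Phi u (c + q (k+1))) + nrm (Phi u (c - q (k+1)))"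
proof -
  define Q where "Q = q (k+1)"
  define Q' where "Q' = nat Q"
  have QQ: "int Q' = Q" using qpos[of "k+1"] unfolding Q'_def Q_def by simp
  have per: "vat (of_int (n + Q) * \<alpha> + \<theta>) = vat (of_int n * \<alpha> + \<theta>)" if "c - Q \<le> n" "n < c" for n
    using per_of_T[of \<theta> "k+1" n] hM that unfolding hasM_def Q_def by auto
  define A where "A = W E lam (of_int (c - Q) * \<alpha> + \<theta>) Q'"
  have AB: "W E lam (of_int c * \<alpha> + \<theta>) Q' = A" unfolding A_def
  proof (rule W_cong)
    fix i assume "i < Q'"
    then have "c - Q \<le> c - Q + int i" "c - Q + int i < c" using QQ by auto
    from per[OF this] show "vat (of_int c * \<alpha> + \<theta> + real i * \<alpha>) = vat (of_int (c - Q) * \<alpha> + \<theta> + real i * \<alpha>)"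
      by (simp add: algebra_simps)
  qed
  have trA: "mtr A = xt E lam (k+1)" unfolding A_def Q'_def Q_def
  proof (rule main_trace[OF kK q2])
    fix i assume "0 \<le> i" "i < q (k+1)"
    then show "vat (of_int (c - q (k+1) + i) * \<alpha> + \<theta>) = vat (of_int (c - q (k+1) + i + q (k+1)) * \<alpha> + \<theta>)"
      using per[of "c - Q + i"] unfolding Q_def by simp
  qed
  have p1: "Phi u c = mv A (Phi u (c - Q))" using Phi_W[OF eq, of "c - Q" Q'] QQ unfolding A_def by simp
  have p2: "Phi u (c + Q) = mv A (Phi u c)" using Phi_W[OF eq, of c Q'] QQ AB by simp
  have dA: "mdet A = 1" unfolding A_def by (rule W_det)
  have "Phi u (c + Q) = (mtr A * fst (Phi u c) - fst (Phi u (c - Q)), mtr A * snd (Phi u c) - snd (Phi u (c - Q)))"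
    unfolding p2 p1 using cayley[OF dA] by simp
  then have "fst (Phi u (c + Q)) + fst (Phi u (c - Q)) = mtr A * fst (Phi u c)"
    "snd (Phi u (c + Q)) + snd (Phi u (c - Q)) = mtr A * snd (Phi u c)" by auto
  then have "\<bar>mtr A\<bar> * \<bar>fst (Phi u c)\<bar> \<le> \<bar>fst (Phi u (c + Q))\<bar> + \<bar>fst (Phi u (c - Q))\<bar>"
    "\<bar>mtr A\<bar> * \<bar>snd (Phi u c)\<bar> \<le> \<bar>snd (Phi u (c + Q))\<bar> + \<bar>snd (Phi u (c - Q))\<bar>"
    by (metis abs_mult abs_triangle_ineq)+
  then show ?thesis unfolding nrm_def trA[symmetric] Q_def[symmetric] by (simp add: algebra_simps)
qed

lemma gordonR:
  assumes eq: "\<And>n. u (n+1) + u (n-1) + lam * vat (of_int n * \<alpha> + \<theta>) * u n = E * u n"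
    and kK: "K \<le> k" and q2: "2 \<le> q k" and hR: "hasR \<theta> (k+1) c"
  shows "nrm (Phi u c) \<le> nrm (Phi u (c + 2 * q (k+1))) + \<bar>xt E lam (k+1)\<bar> * nrm (Phi u (c + q (k+1)))"
proof -
  define Q where "Q = q (k+1)"
  define Q' where "Q' = nat Q"
  have QQ: "int Q' = Q" using qpos[of "k+1"] unfolding Q'_def Q_def by simp
  have per: "vat (of_int (n + Q) * \<alpha> + \<theta>) = vat (of_int n * \<alpha> + \<theta>)" if "c \<le> n" "n < c + Q" for n
    using per_of_T[of \<theta> "k+1" n] hR that unfolding hasR_def Q_def by auto
  define A where "A = W E lam (of_int c * \<alpha> + \<theta>) Q'"
  have AB: "W E lam (of_int (c + Q) * \<alpha> + \<theta>) Q' = A" unfolding A_def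
  proof (rule W_cong)
    fix i assume "i < Q'"
    then have "c \<le> c + int i" "c + int i < c + Q" using QQ by auto
    from per[OF this] show "vat (of_int (c + Q) * \<alpha> + \<theta> + real i * \<alpha>) = vat (of_int c * \<alpha> + \<theta> + real i * \<alpha>)"
      by (simp add: algebra_simps)
  qed
  have trA: "mtr A = xt E lam (k+1)" unfolding A_def Q'_def Q_def
  proof (rule main_trace[OF kK q2])
    fix i assume "0 \<le> i" "i < q (k+1)"
    then show "vat (of_int (c + i) * \<alpha> + \<theta>) = vat (of_int (c + i + q (k+1)) * \<alpha> + \<theta>)"
      using per[of "c + i"] unfolding Q_def by simp
  qed
  have p1: "Phi u (c + Q) = mv A (Phi u c)" using Phi_W[OF eq, of c Q'] QQ unfolding A_def by simp
  have p2: "Phi u (c + Q + Q) = mv A (Phi u (c + Q))" using Phi_W[OF eq, of "c + Q" Q'] QQ AB by simp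
  have dA: "mdet A = 1" unfolding A_def by (rule W_det)
  have "Phi u (c + Q + Q) = (mtr A * fst (Phi u (c + Q)) - fst (Phi u c), mtr A * snd (Phi u (c + Q)) - snd (Phi u c))"
    unfolding p2 p1 using cayley[OF dA] by simp
  then have "fst (Phi u c) = mtr A * fst (Phi u (c + Q)) - fst (Phi u (c + Q + Q))"
    "snd (Phi u c) = mtr A * snd (Phi u (c + Q)) - snd (Phi u (c + Q + Q))" by auto
  then have "\<bar>fst (Phi u c)\<bar> \<le> \<bar>fst (Phi u (c + Q + Q))\<bar> + \<bar>mtr A\<bar> * \<bar>fst (Phi u (c + Q))\<bar>"
    "\<bar>snd (Phi u c)\<bar> \<le> \<bar>snd (Phi u (c + Q + Q))\<bar> + \<bar>mtr A\<bar> * \<bar>snd (Phi u (c + Q))\<bar>"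
    by (metis abs_mult abs_triangle_ineq4 add.commute)+
  moreover have "c + Q + Q = c + 2 * Q" by simp
  ultimately show ?thesis unfolding nrm_def trA[symmetric] Q_def[symmetric] by (simp add: algebra_simps)
qed

end

lemma amgm_abs: "\<bar>y\<bar> \<le> 1 \<Longrightarrow> \<bar>x * y * z\<bar> \<le> ((x::real)\<^sup>2 + z\<^sup>2) / 2"
proof -
  assume y: "\<bar>y\<bar> \<le> 1"
  have "\<bar>x * y * z\<bar> = \<bar>x\<bar> * \<bar>z\<bar> * \<bar>y\<bar>" by (simp add: abs_mult)
  also have "\<dots> \<le> \<bar>x\<bar> * \<bar>z\<bar>" using y by (simp add: mult_left_le)
  also have "\<dots> \<le> (x\<^sup>2 + z\<^sup>2) / 2"
  proof -
    have "0 \<le> (\<bar>x\<bar> - \<bar>z\<bar>)\<^sup>2" by simp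
    then show ?thesis by (simp add: power2_eq_square algebra_simps)
  qed
  finally show ?thesis .
qed

lemma lin_aux:
  fixes p xx zz bb s i0 yy :: real
  assumes "\<bar>p\<bar> \<le> (xx + zz) / 2" "bb < xx" "s - p = i0" "s = xx + yy + zz" "0 \<le> yy" "0 \<le> zz"
  shows "bb / 2 \<le> i0"
proof -
  have "p \<le> \<bar>p\<bar>" by simp
  then have "2 * p \<le> xx + zz" using assms(1) by simp
  moreover have "i0 = xx + yy + zz - p" using assms(3,4) by simp
  ultimately have "xx + 2 * yy + zz \<le> 2 * i0" by simp
  then have "bb \<le> 2 * i0" using assms(2,5,6) by simp
  then show ?thesis by simp
qed

lemma triple_contra:
  fixes a b c s B I0 :: real
  assumes I: "a\<^sup>2 + b\<^sup>2 + c\<^sup>2 - a * b * c = I0"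
    and s1: "s \<le> 1" and sB: "s < B" and BI: "\<bar>I0\<bar> < B\<^sup>2 / 2" and B0: "0 < B"
    and sm: "\<bar>a\<bar> < s \<or> \<bar>b\<bar> < s"
    and bg: "B < \<bar>a\<bar> \<or> B < \<bar>b\<bar> \<or> B < \<bar>c\<bar>"
  shows False
proof -
  have B2: "B\<^sup>2 / 2 \<le> I0" if "\<bar>y\<bar> \<le> 1" "B < \<bar>x\<bar>" "\<bar>a * b * c\<bar> = \<bar>x * y * z\<bar>"
    "a\<^sup>2 + b\<^sup>2 + c\<^sup>2 = x\<^sup>2 + y\<^sup>2 + z\<^sup>2" for x y z
  proof -
    have "\<bar>a * b * c\<bar> \<le> (x\<^sup>2 + z\<^sup>2) / 2" using amgm_abs[OF that(1)] that(3) by simp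
    moreover have "B\<^sup>2 < x\<^sup>2"
    proof -
      have "B\<^sup>2 < \<bar>x\<bar>\<^sup>2" using that(2) B0 by (intro power_strict_mono) auto
      then show ?thesis by simp
    qed
    moreover have "0 \<le> y\<^sup>2" "0 \<le> z\<^sup>2" by simp_all
    ultimately show ?thesis using I that(4) lin_aux[of "a*b*c" "x\<^sup>2" "z\<^sup>2" "B\<^sup>2" "a\<^sup>2 + b\<^sup>2 + c\<^sup>2" I0 "y\<^sup>2"] by simp
  qed
  from sm bg show False
  proof (elim disjE)
    assume "\<bar>a\<bar> < s" "B < \<bar>a\<bar>" then show False using sB by simp
  next
    assume "\<bar>b\<bar> < s" "B < \<bar>b\<bar>" then show False using sB by simp
  next
    assume "\<bar>a\<bar> < s" "B < \<bar>b\<bar>"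
    then have "B\<^sup>2/2 \<le> I0" using B2[of a b c] s1 by (simp add: ac_simps)
    then show False using BI by simp
  next
    assume "\<bar>a\<bar> < s" "B < \<bar>c\<bar>"
    then have "B\<^sup>2/2 \<le> I0" using B2[of a c b] s1 by (simp add: ac_simps)
    then show False using BI by simp
  next
    assume "\<bar>b\<bar> < s" "B < \<bar>a\<bar>"
    then have "B\<^sup>2/2 \<le> I0" using B2[of b a c] s1 by (simp add: ac_simps)
    then show False using BI by simp
  next
    assume "\<bar>b\<bar> < s" "B < \<bar>c\<bar>"
    then have "B\<^sup>2/2 \<le> I0" using B2[of b c a] s1 by (simp add: ac_simps)
    then show False using BI by simp
  qed
qed

context gcf begin

lemma u_zero_prop:
  assumes eq: "\<And>n. u (n+1) + u (n-1) + lam * vat (of_int n * \<alpha> + \<theta>) * u n = E * u n"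
    and z: "u c = 0" "u (c - 1) = 0"
  shows "u n = 0"
proof -
  have fw: "u (c + int l) = 0 \<and> u (c + int l - 1) = 0" for l
  proof (induction l)
    case 0 then show ?case using z by simp
  next
    case (Suc l)
    have "u (c + int l + 1) = 0" using eq[of "c + int l"] Suc by simp
    moreover have e: "c + int (Suc l) = c + int l + 1" by simp
    ultimately show ?case using Suc unfolding e by simp
  qed
  have bw: "u (c - int l) = 0 \<and> u (c - int l - 1) = 0" for l
  proof (induction l)
    case 0 then show ?case using z by simp
  next
    case (Suc l)
    have "u (c - int l - 1 - 1) = 0" using eq[of "c - int l - 1"] Suc by simp
    then show ?case using Suc by (simp add: algebra_simps)
  qed
  show ?thesis
  proof (cases "c \<le> n")
    case True
    then show ?thesis using fw[of "nat (n - c)"] by simp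
  next
    case False
    then show ?thesis using bw[of "nat (c - n)"] by simp
  qed
qed

theorem no_decaying_solution:
  assumes eq: "\<And>n. u (n+1) + u (n-1) + lam * vat (of_int n * \<alpha> + \<theta>) * u n = E * u n"
    and nz: "u n0 \<noteq> 0"
    and dec: "\<And>e. 0 < e \<Longrightarrow> \<exists>M. \<forall>n. M \<le> \<bar>n\<bar> \<longrightarrow> \<bar>u n\<bar> < e"
  shows False
proof -
  have pos: "0 < nrm (Phi u c)" for c
  proof (rule ccontr)
    assume "\<not> 0 < nrm (Phi u c)"
    then have "u c = 0" "u (c - 1) = 0" unfolding nrm_def Phi_def by auto
    then show False using u_zero_prop[OF eq] nz by blast
  qed
  define \<mu> where "\<mu> = min (nrm (Phi u (-1))) (min (nrm (Phi u 0)) (nrm (Phi u 1)))"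
  have mu0: "0 < \<mu>" unfolding \<mu>_def using pos by simp
  have muc: "\<mu> \<le> nrm (Phi u c)" if "c = -1 \<or> c = 0 \<or> c = 1" for c
    using that unfolding \<mu>_def by auto
  define I0 where "I0 = Iv E lam (K + 3)"
  define T where "T = 3 + 2 * \<bar>I0\<bar>"
  define \<epsilon> where "\<epsilon> = \<mu> / (T + 1)"
  have T3: "3 \<le> T" unfolding T_def by simp
  have e0: "0 < \<epsilon>" unfolding \<epsilon>_def using mu0 T3 by simp
  obtain M where M: "\<And>n. M \<le> \<bar>n\<bar> \<Longrightarrow> \<bar>u n\<bar> < \<epsilon> / 2"
    using dec[of "\<epsilon>/2"] e0 by auto
  have smallPhi: "nrm (Phi u n) < \<epsilon>" if "M + 1 \<le> \<bar>n\<bar>" for n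
  proof -
    have "\<bar>u n\<bar> < \<epsilon>/2" using M that by simp
    moreover have "\<bar>u (n - 1)\<bar> < \<epsilon>/2"
    proof (rule M)
      show "M \<le> \<bar>n - 1\<bar>" using that by arith
    qed
    ultimately show ?thesis unfolding nrm_def Phi_def by simp
  qed
  define k where "k = K + 3 + nat M"
  have kK: "K \<le> k" unfolding k_def by simp
  have h: "int (3 + nat M) \<le> q k" using q_ge[of K "3 + nat M"] unfolding k_def by (simp only: add.assoc)
  have hh: "int (3 + nat M) = 3 + int (nat M)" "M \<le> int (nat M)" "0 \<le> int (nat M)" by simp_all
  have q3: "3 \<le> q k" using h hh by linarith
  have qM: "M + 3 \<le> q k" using h hh by linarith
  have q2: "2 \<le> q k" "2 \<le> q (k+1)" "2 \<le> q (k+2)" using q3 q3_mono[OF q3, of "k+1"] q3_mono[OF q3, of "k+2"] by auto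
  have qM': "M + 3 \<le> q (k + j)" for j using qM lift_Suc_mono_le[of q, OF qmono, of k "k+j"] by simp
  define s where "s = 2 * \<epsilon> / \<mu>"
  define B where "B = \<mu> / \<epsilon> - 1"
  have Bv: "B = T" unfolding B_def \<epsilon>_def using mu0 T3 by simp
  have sv: "s = 2 / (T + 1)" unfolding s_def \<epsilon>_def using mu0 T3 by simp
  have s1: "s \<le> 1" using sv T3 by simp
  have sB: "s < B" using s1 Bv T3 by simp
  have B0: "0 < B" using Bv T3 by simp
  have BI: "\<bar>I0\<bar> < B\<^sup>2 / 2"
  proof -
    have "T * T \<ge> 3 * T" using T3 by (simp add: mult_right_mono)
    then show ?thesis unfolding Bv power2_eq_square T_def by simp
  qed
  have Mest: "\<bar>xt E lam (k'+1)\<bar> < s" if k': "k \<le> k'" and hm: "hasM \<theta> (k'+1) c" and c: "c = -1 \<or> c = 0 \<or> c = 1" for k' c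
  proof -
    have kK': "K \<le> k'" using kK k' by simp
    have q2': "2 \<le> q k'" using q2_mono[OF q2(1) k'] .
    have G: "\<bar>xt E lam (k'+1)\<bar> * nrm (Phi u c) \<le> nrm (Phi u (c + q (k'+1))) + nrm (Phi u (c - q (k'+1)))"
      by (rule gordonM[OF eq kK' q2' hm])
    have qq: "M + 3 \<le> q (k'+1)" using qM'[of "k' + 1 - k"] k' by simp
    have "M + 1 \<le> \<bar>c + q (k'+1)\<bar>" using c qq by arith
    then have "nrm (Phi u (c + q (k'+1))) < \<epsilon>" by (rule smallPhi)
    have "M + 1 \<le> \<bar>c - q (k'+1)\<bar>" using c qq by arith
    then have "nrm (Phi u (c - q (k'+1))) < \<epsilon>" by (rule smallPhi)
    note this \<open>nrm (Phi u (c + q (k'+1))) < \<epsilon>\<close>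
    then have "\<bar>xt E lam (k'+1)\<bar> * nrm (Phi u c) < 2 * \<epsilon>" using G by simp
    moreover have "\<bar>xt E lam (k'+1)\<bar> * \<mu> \<le> \<bar>xt E lam (k'+1)\<bar> * nrm (Phi u c)"
      using muc[OF c] by (simp add: mult_left_mono)
    ultimately have "\<bar>xt E lam (k'+1)\<bar> * \<mu> < 2 * \<epsilon>" by simp
    then show ?thesis unfolding s_def using mu0 by (simp add: pos_less_divide_eq)
  qed
  have Rest: "B < \<bar>xt E lam (k'+1)\<bar>" if k': "k \<le> k'" and hr: "hasR \<theta> (k'+1) c" and c: "c = -1 \<or> c = 0 \<or> c = 1" for k' c
  proof -
    have kK': "K \<le> k'" using kK k' by simp
    have q2': "2 \<le> q k'" using q2_mono[OF q2(1) k'] .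
    have G: "nrm (Phi u c) \<le> nrm (Phi u (c + 2 * q (k'+1))) + \<bar>xt E lam (k'+1)\<bar> * nrm (Phi u (c + q (k'+1)))"
      by (rule gordonR[OF eq kK' q2' hr])
    have qq: "M + 3 \<le> q (k'+1)" using qM'[of "k' + 1 - k"] k' by simp
    have "M + 1 \<le> \<bar>c + 2 * q (k'+1)\<bar>" using c qq by arith
    then have a1: "nrm (Phi u (c + 2 * q (k'+1))) < \<epsilon>" by (rule smallPhi)
    have "M + 1 \<le> \<bar>c + q (k'+1)\<bar>" using c qq by arith
    then have a2: "nrm (Phi u (c + q (k'+1))) < \<epsilon>" by (rule smallPhi)
    have "\<bar>xt E lam (k'+1)\<bar> * nrm (Phi u (c + q (k'+1))) \<le> \<bar>xt E lam (k'+1)\<bar> * \<epsilon>"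
      using a2 by (simp add: mult_left_mono)
    then have "\<mu> < \<epsilon> + \<bar>xt E lam (k'+1)\<bar> * \<epsilon>" using G a1 muc[OF c] by simp
    then have "\<mu> / \<epsilon> < 1 + \<bar>xt E lam (k'+1)\<bar>" using e0 by (simp add: divide_less_eq algebra_simps)
    then show ?thesis unfolding B_def by simp
  qed
  have kk1: "k \<le> k" "k \<le> k+1" "k \<le> k+2" by simp_all
  have cs: "(-1::int) = -1 \<or> (-1::int) = 0 \<or> (-1::int) = 1" "(0::int) = -1 \<or> (0::int) = 0 \<or> (0::int) = 1"
     "(1::int) = -1 \<or> (1::int) = 0 \<or> (1::int) = 1" by simp_all
  have sm: "\<bar>xt E lam (k+1)\<bar> < s \<or> \<bar>xt E lam (k+2)\<bar> < s"
  proof -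
    have e2: "k + 2 = (k+1) + 1" by simp
    from claimM[OF kK q3, of \<theta>] show ?thesis
    proof (elim disjE)
      assume "hasM \<theta> (k+1) (-1)" then show ?thesis using Mest[OF kk1(1) _ cs(1)] by blast
    next
      assume "hasM \<theta> (k+1) 0" then show ?thesis using Mest[OF kk1(1) _ cs(2)] by blast
    next
      assume "hasM \<theta> (k+1) 1" then show ?thesis using Mest[OF kk1(1) _ cs(3)] by blast
    next
      assume "hasM \<theta> (k+2) (-1)" then show ?thesis using Mest[OF kk1(2) _ cs(1)] unfolding e2 by blast
    next
      assume "hasM \<theta> (k+2) 0" then show ?thesis using Mest[OF kk1(2) _ cs(2)] unfolding e2 by blast
    next
      assume "hasM \<theta> (k+2) 1" then show ?thesis using Mest[OF kk1(2) _ cs(3)] unfolding e2 by blast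
    qed
  qed
  have bg: "B < \<bar>xt E lam (k+1)\<bar> \<or> B < \<bar>xt E lam (k+2)\<bar> \<or> B < \<bar>xt E lam (k+3)\<bar>"
  proof -
    have e2: "k + 2 = (k+1) + 1" and e3: "k + 3 = (k+2) + 1" by simp_all
    from claimR[OF kK q3, of \<theta>] show ?thesis
    proof (elim disjE)
      assume "hasR \<theta> (k+1) (-1)" then show ?thesis using Rest[OF kk1(1) _ cs(1)] by blast
    next
      assume "hasR \<theta> (k+1) 0" then show ?thesis using Rest[OF kk1(1) _ cs(2)] by blast
    next
      assume "hasR \<theta> (k+1) 1" then show ?thesis using Rest[OF kk1(1) _ cs(3)] by blast
    next
      assume "hasR \<theta> (k+2) (-1)" then show ?thesis using Rest[OF kk1(2) _ cs(1)] unfolding e2 by blast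
    next
      assume "hasR \<theta> (k+2) 0" then show ?thesis using Rest[OF kk1(2) _ cs(2)] unfolding e2 by blast
    next
      assume "hasR \<theta> (k+2) 1" then show ?thesis using Rest[OF kk1(2) _ cs(3)] unfolding e2 by blast
    next
      assume "hasR \<theta> (k+3) (-1)" then show ?thesis using Rest[OF kk1(3) _ cs(1)] unfolding e3 by blast
    next
      assume "hasR \<theta> (k+3) 0" then show ?thesis using Rest[OF kk1(3) _ cs(2)] unfolding e3 by blast
    next
      assume "hasR \<theta> (k+3) 1" then show ?thesis using Rest[OF kk1(3) _ cs(3)] unfolding e3 by blast
    qed
  qed
  have Iv_eq: "Iv E lam (k+1) = I0"
  proof -
    have "k + 1 = K + 3 + (nat M + 1)" unfolding k_def by simp
    then show ?thesis unfolding I0_def using Iv_const[of E lam "nat M + 1"] by simp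
  qed
  have I: "(xt E lam (k+1))\<^sup>2 + (xt E lam (k+2))\<^sup>2 + (xt E lam (k+3))\<^sup>2 - xt E lam (k+1) * xt E lam (k+2) * xt E lam (k+3) = I0"
    using Iv_eq unfolding Iv_def by (simp add: numeral_eq_Suc)
  show False by (rule triple_contra[OF I s1 sB BI B0 sm bg])
qed

end

lemma frac_irr: "y \<notin> \<rat> \<Longrightarrow> frac y \<notin> \<rat>"
proof
  assume "y \<notin> \<rat>" "frac y \<in> \<rat>"
  then have "frac y + of_int \<lfloor>y\<rfloor> \<in> \<rat>" by (simp add: Rats_add)
  then show False using \<open>y \<notin> \<rat>\<close> by (simp add: frac_def)
qed

lemma inv_irr: "y \<notin> \<rat> \<Longrightarrow> 1 / (y::real) \<notin> \<rat>"
proof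
  assume "y \<notin> \<rat>" "1 / y \<in> \<rat>"
  have "inverse (1 / y) \<in> \<rat>" by (rule Rats_inverse[OF \<open>1 / y \<in> \<rat>\<close>])
  moreover have "inverse (1 / y) = y" by simp
  ultimately show False using \<open>y \<notin> \<rat>\<close> by simp
qed

lemma gauss_props:
  assumes "\<alpha> \<notin> \<rat>" "0 < \<alpha>" "\<alpha> < 1"
  shows "0 < gauss_iter \<alpha> i \<and> gauss_iter \<alpha> i < 1 \<and> gauss_iter \<alpha> i \<notin> \<rat>"
proof (induction i)
  case 0 then show ?case using assms by simp
next
  case (Suc i)
  have irr: "frac (1 / gauss_iter \<alpha> i) \<notin> \<rat>" using Suc frac_irr inv_irr by blast
  then have "frac (1 / gauss_iter \<alpha> i) \<noteq> 0" using Rats_0 by metis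
  then have "0 < frac (1 / gauss_iter \<alpha> i)" using frac_ge_0[of "1 / gauss_iter \<alpha> i"] by linarith
  then show ?case using irr frac_lt_1 by simp
qed

lemma cf_succ: "cf_coeff \<alpha> (Suc i) = \<lfloor>1 / gauss_iter \<alpha> i\<rfloor>"
  by (simp add: cf_coeff_def)

lemma gauss_succ: "gauss_iter \<alpha> (Suc i) = 1 / gauss_iter \<alpha> i - of_int (cf_coeff \<alpha> (Suc i))"
  by (simp add: cf_coeff_def frac_def)

lemma cf_ge1:
  assumes "\<alpha> \<notin> \<rat>" "0 < \<alpha>" "\<alpha> < 1"
  shows "1 \<le> cf_coeff \<alpha> (Suc i)"
proof -
  have g: "0 < gauss_iter \<alpha> i" "gauss_iter \<alpha> i < 1" using gauss_props[OF assms] by auto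
  then have "1 < 1 / gauss_iter \<alpha> i" by simp
  then show ?thesis unfolding cf_succ by linarith
qed

fun qq :: "real \<Rightarrow> nat \<Rightarrow> int" where
  "qq \<alpha> 0 = 1"
| "qq \<alpha> (Suc 0) = cf_coeff \<alpha> 1"
| "qq \<alpha> (Suc (Suc k)) = cf_coeff \<alpha> (k+2) * qq \<alpha> (Suc k) + qq \<alpha> k"

fun pp :: "real \<Rightarrow> nat \<Rightarrow> int" where
  "pp \<alpha> 0 = 0"
| "pp \<alpha> (Suc 0) = 1"
| "pp \<alpha> (Suc (Suc k)) = cf_coeff \<alpha> (k+2) * pp \<alpha> (Suc k) + pp \<alpha> k"

definition dd :: "real \<Rightarrow> nat \<Rightarrow> real" where "dd \<alpha> k = of_int (qq \<alpha> k) * \<alpha> - of_int (pp \<alpha> k)"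

lemma dd_rec:
  assumes "\<alpha> \<notin> \<rat>" "0 < \<alpha>" "\<alpha> < 1"
  shows "dd \<alpha> (Suc k) = - gauss_iter \<alpha> (Suc k) * dd \<alpha> k"
proof (induction k)
  case 0
  have "gauss_iter \<alpha> 1 = 1 / \<alpha> - of_int (cf_coeff \<alpha> 1)" using gauss_succ[of \<alpha> 0] by simp
  then show ?case unfolding dd_def using assms by (simp add: field_simps)
next
  case (Suc k)
  have x0: "gauss_iter \<alpha> (Suc k) \<noteq> 0" using gauss_props[OF assms, of "Suc k"] by auto
  have e: "dd \<alpha> (Suc (Suc k)) = of_int (cf_coeff \<alpha> (k+2)) * dd \<alpha> (Suc k) + dd \<alpha> k"
    unfolding dd_def by (simp add: algebra_simps)
  have dk: "dd \<alpha> k = - dd \<alpha> (Suc k) / gauss_iter \<alpha> (Suc k)" using Suc x0 by (simp add: field_simps)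
  have g: "gauss_iter \<alpha> (Suc (Suc k)) = 1 / gauss_iter \<alpha> (Suc k) - of_int (cf_coeff \<alpha> (k+2))"
    using gauss_succ[of \<alpha> "Suc k"] by (simp add: numeral_eq_Suc)
  show ?case unfolding e dk g using x0 by (simp add: field_simps)
qed

lemma dd_nz:
  assumes "\<alpha> \<notin> \<rat>" "0 < \<alpha>" "\<alpha> < 1"
  shows "dd \<alpha> k \<noteq> 0"
proof (induction k)
  case 0 then show ?case using assms by (simp add: dd_def)
next
  case (Suc k) then show ?case using dd_rec[OF assms, of k] gauss_props[OF assms, of "Suc k"] by simp
qed

lemma qq_det: "\<bar>qq \<alpha> (Suc k) * pp \<alpha> k - pp \<alpha> (Suc k) * qq \<alpha> k\<bar> = 1"
proof -
  have "qq \<alpha> (Suc k) * pp \<alpha> k - pp \<alpha> (Suc k) * qq \<alpha> k = (-1) ^ (Suc k)"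
  proof (induction k)
    case 0 then show ?case by simp
  next
    case (Suc k)
    have "qq \<alpha> (Suc (Suc k)) * pp \<alpha> (Suc k) - pp \<alpha> (Suc (Suc k)) * qq \<alpha> (Suc k)
        = - (qq \<alpha> (Suc k) * pp \<alpha> k - pp \<alpha> (Suc k) * qq \<alpha> k)" by (simp add: algebra_simps)
    then show ?case using Suc by simp
  qed
  then show ?thesis by (simp add: abs_mult)
qed

lemma qq_pos_mono:
  assumes "\<alpha> \<notin> \<rat>" "0 < \<alpha>" "\<alpha> < 1"
  shows "1 \<le> qq \<alpha> k \<and> qq \<alpha> k \<le> qq \<alpha> (Suc k)"
proof (induction k)
  case 0 then show ?case using cf_ge1[OF assms, of 0] by simp
next
  case (Suc k)
  have a: "1 \<le> cf_coeff \<alpha> (k+2)" using cf_ge1[OF assms, of "Suc k"] by (simp add: numeral_eq_Suc)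
  have q1: "1 \<le> qq \<alpha> (Suc k)" using Suc by simp
  have m: "1 * qq \<alpha> (Suc k) \<le> cf_coeff \<alpha> (k+2) * qq \<alpha> (Suc k)" using a q1 by (intro mult_right_mono) auto
  have e: "qq \<alpha> (Suc (Suc k)) = cf_coeff \<alpha> (k+2) * qq \<alpha> (Suc k) + qq \<alpha> k" by simp
  have "qq \<alpha> (Suc k) \<le> qq \<alpha> (Suc (Suc k))" using m e Suc by linarith
  then show ?case using q1 by simp
qed

lemma decay:
  fixes u :: "int \<Rightarrow> complex"
  assumes s: "(\<lambda>n. (norm (u n))\<^sup>2) summable_on UNIV" and e: "0 < e"
  shows "\<exists>M. \<forall>n. M \<le> \<bar>n\<bar> \<longrightarrow> norm (u n) < e"
proof -
  define f where "f n = (norm (u n))\<^sup>2" for n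
  have lim: "(\<lambda>n. f (h n)) \<longlonglongrightarrow> 0" if inj: "inj h" for h :: "nat \<Rightarrow> int"
  proof -
    have "f summable_on (range h)" using summable_on_subset_banach[OF s[folded f_def]] by simp
    then have "(f \<circ> h) summable_on UNIV" using summable_on_reindex[of h UNIV f] that by simp
    then have "summable (f \<circ> h)" using summable_on_UNIV_nonneg_real_iff[of "f \<circ> h"] unfolding f_def by simp
    from summable_LIMSEQ_zero[OF this] show ?thesis by (simp add: o_def)
  qed
  have i1: "inj (\<lambda>n::nat. int n)" by (simp add: inj_on_def)
  have i2: "inj (\<lambda>n::nat. - int n)" by (simp add: inj_on_def)
  have e2: "0 < e\<^sup>2" using e by simp
  obtain N1 where N1: "\<And>n. n \<ge> N1 \<Longrightarrow> \<bar>f (int n) - 0\<bar> < e\<^sup>2"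
    using lim[OF i1] e2 unfolding LIMSEQ_def dist_real_def by blast
  obtain N2 where N2: "\<And>n. n \<ge> N2 \<Longrightarrow> \<bar>f (- int n) - 0\<bar> < e\<^sup>2"
    using lim[OF i2] e2 unfolding LIMSEQ_def dist_real_def by blast
  have small: "norm (u n) < e" if "f n < e\<^sup>2" for n
  proof -
    have "(norm (u n))\<^sup>2 < e\<^sup>2" using that unfolding f_def .
    then show ?thesis using e by (smt (verit) norm_ge_zero power_mono)
  qed
  show ?thesis
  proof (rule exI[of _ "int (max N1 N2)"], intro allI impI)
    fix n :: int assume n: "int (max N1 N2) \<le> \<bar>n\<bar>"
    show "norm (u n) < e"
    proof (cases "0 \<le> n")
      case True
      then have "n = int (nat n)" "nat n \<ge> N1" using n by auto
      then show ?thesis using N1[of "nat n"] small[of n] by (simp add: f_def)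
    next
      case False
      then have "n = - int (nat (-n))" "nat (-n) \<ge> N2" using n by auto
      then show ?thesis using N2[of "nat (-n)"] small[of n] by (metis abs_of_nonneg diff_zero f_def zero_le_power2 norm_ge_zero)
    qed
  qed
qed

lemma telescope_int:
  fixes g :: "int \<Rightarrow> real"
  shows "(\<Sum>n\<in>{- int N..int N}. g n - g (n - 1)) = g (int N) - g (- int N - 1)"
proof (induction N)
  case 0 then show ?case by simp
next
  case (Suc N)
  have s: "{- int (Suc N)..int (Suc N)} = insert (- int (Suc N)) (insert (int (Suc N)) {- int N..int N})" by auto
  have "(\<Sum>n\<in>{- int (Suc N)..int (Suc N)}. g n - g (n - 1))
      = (g (- int (Suc N)) - g (- int (Suc N) - 1)) + ((g (int (Suc N)) - g (int (Suc N) - 1)) + (\<Sum>n\<in>{- int N..int N}. g n - g (n - 1)))"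
    unfolding s by (subst sum.insert; simp)+
  also have "\<dots> = g (int (Suc N)) - g (- int (Suc N) - 1)"
  proof -
    have g1: "g (- int (Suc N)) = g (- int N - 1)" by (rule arg_cong[where f=g]) simp
    have g2: "g (int (Suc N) - 1) = g (int N)" by (rule arg_cong[where f=g]) simp
    show ?thesis using Suc g1 g2 by linarith
  qed
  finally show ?case .
qed

lemma Im_zero:
  fixes u :: "int \<Rightarrow> complex" and E :: complex and V :: "int \<Rightarrow> real"
  assumes eq: "\<And>n. u (n+1) + u (n-1) + complex_of_real (V n) * u n = E * u n"
    and nz: "u n0 \<noteq> 0"
    and dec: "\<And>e. 0 < e \<Longrightarrow> \<exists>M. \<forall>n. M \<le> \<bar>n\<bar> \<longrightarrow> norm (u n) < e"
  shows "Im E = 0"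
proof (rule ccontr)
  assume ne: "Im E \<noteq> 0"
  define a where "a n = cnj (u n) * u (n+1)" for n
  have pt: "Im E * (norm (u n))\<^sup>2 = Im (a n) - Im (a (n - 1))" for n
  proof -
    have h0: "u (n+1) + u (n-1) = E * u n - complex_of_real (V n) * u n" using eq[of n] by (simp add: eq_diff_eq)
    have h: "u (n+1) + u (n-1) = (E - complex_of_real (V n)) * u n" unfolding h0 by (simp add: algebra_simps)
    have "cnj (u n) * (u (n+1) + u (n-1)) = cnj (u n) * ((E - complex_of_real (V n)) * u n)"
      by (simp only: h)
    also have "\<dots> = (E - complex_of_real (V n)) * (cnj (u n) * u n)"
      by (simp add: algebra_simps)
    also have "\<dots> = (E - complex_of_real (V n)) * complex_of_real ((norm (u n))\<^sup>2)"
      by (simp only: complex_norm_square[symmetric] mult.commute[of "cnj (u n)"]) 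
    finally have A: "Im (cnj (u n) * (u (n+1) + u (n-1))) = Im E * (norm (u n))\<^sup>2"
      by simp
    have "cnj (u n) * u (n-1) = cnj (a (n - 1))" unfolding a_def by (simp add: mult.commute)
    then have "Im (cnj (u n) * (u (n+1) + u (n-1))) = Im (a n) - Im (a (n - 1))"
      unfolding a_def by (simp add: distrib_left)
    then show ?thesis using A by simp
  qed
  define c where "c = (norm (u n0))\<^sup>2"
  have c0: "0 < c" unfolding c_def using nz by simp
  define e where "e = min 1 (\<bar>Im E\<bar> * c / 4)"
  have e0: "0 < e" unfolding e_def using ne c0 by simp
  obtain M where M: "\<And>n. M \<le> \<bar>n\<bar> \<Longrightarrow> norm (u n) < e" using dec[OF e0] by blast
  define N where "N = nat (max M \<bar>n0\<bar>)"
  have NM: "M \<le> int N" "\<bar>n0\<bar> \<le> int N" unfolding N_def by auto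
  have sumeq: "Im E * (\<Sum>n\<in>{- int N..int N}. (norm (u n))\<^sup>2) = Im (a (int N)) - Im (a (- int N - 1))"
    using telescope_int[of "\<lambda>n. Im (a n)" N] pt by (simp add: sum_distrib_left)
  have bnd: "\<bar>Im (a n)\<bar> \<le> norm (u n) * norm (u (n+1))" for n
    unfolding a_def using abs_Im_le_cmod[of "cnj (u n) * u (n+1)"] by (simp add: norm_mult)
  have u1: "norm (u (int N)) < e" "norm (u (int N + 1)) < e" "norm (u (- int N - 1)) < e" "norm (u (- int N - 1 + 1)) < e"
    using NM by (auto intro!: M)
  have p1: "norm (u (int N)) * norm (u (int N + 1)) \<le> e * e"
    using u1 e0 by (intro mult_mono) auto
  have p2: "norm (u (- int N - 1)) * norm (u (- int N - 1 + 1)) \<le> e * e"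
    using u1 e0 by (intro mult_mono) auto
  have "\<bar>Im E * (\<Sum>n\<in>{- int N..int N}. (norm (u n))\<^sup>2)\<bar> \<le> 2 * (e * e)"
    unfolding sumeq using bnd[of "int N"] bnd[of "- int N - 1"] p1 p2 by linarith
  moreover have "c \<le> (\<Sum>n\<in>{- int N..int N}. (norm (u n))\<^sup>2)"
    unfolding c_def using NM by (intro member_le_sum) auto
  ultimately have X: "\<bar>Im E\<bar> * c \<le> 2 * (e * e)"
  proof -
    assume h1: "\<bar>Im E * (\<Sum>n\<in>{- int N..int N}. (norm (u n))\<^sup>2)\<bar> \<le> 2 * (e * e)"
      and h2: "c \<le> (\<Sum>n\<in>{- int N..int N}. (norm (u n))\<^sup>2)"
    have S0: "0 \<le> (\<Sum>n\<in>{- int N..int N}. (norm (u n))\<^sup>2)" by (intro sum_nonneg) auto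
    have "\<bar>Im E\<bar> * c \<le> \<bar>Im E\<bar> * (\<Sum>n\<in>{- int N..int N}. (norm (u n))\<^sup>2)"
      using h2 by (intro mult_left_mono) auto
    also have "\<dots> = \<bar>Im E * (\<Sum>n\<in>{- int N..int N}. (norm (u n))\<^sup>2)\<bar>" using S0 by (simp add: abs_mult)
    finally show ?thesis using h1 by linarith
  qed
  have e1: "e \<le> 1" unfolding e_def by simp
  have ee: "e * e \<le> e" using e0 e1 by (simp add: mult_left_le)
  have e4: "e \<le> \<bar>Im E\<bar> * c / 4" unfolding e_def by simp
  have Xp: "0 < \<bar>Im E\<bar> * c" using ne c0 by simp
  show False using X ee e4 Xp by linarith
qed

lemma sturm_floor:
  assumes "0 < \<alpha>" "\<alpha> < 1"
  shows "sturm_pot \<alpha> \<theta> n = real_of_int (\<lfloor>of_int n * \<alpha> + \<theta> + \<alpha>\<rfloor> - \<lfloor>of_int n * \<alpha> + \<theta>\<rfloor>)"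
proof -
  define z where "z = of_int n * \<alpha> + \<theta>"
  have zf: "z = of_int \<lfloor>z\<rfloor> + frac z" by (simp add: frac_def)
  have f0: "0 \<le> frac z" "frac z < 1" by (simp_all add: frac_lt_1)
  have fl: "\<lfloor>z + \<alpha>\<rfloor> = \<lfloor>z\<rfloor> + \<lfloor>frac z + \<alpha>\<rfloor>"
  proof -
    have "z + \<alpha> = (frac z + \<alpha>) + of_int \<lfloor>z\<rfloor>" using zf by simp
    then show ?thesis by (simp only: floor_add_int) simp
  qed
  show ?thesis
  proof (cases "1 - \<alpha> \<le> frac z")
    case True
    then have "\<lfloor>frac z + \<alpha>\<rfloor> = 1" using f0 assms by (intro floor_unique) auto
    then show ?thesis using True f0 unfolding sturm_pot_def z_def[symmetric] fl by simp
  next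
    case False
    then have "\<lfloor>frac z + \<alpha>\<rfloor> = 0" using f0 assms by (intro floor_unique) auto
    then show ?thesis using False f0 unfolding sturm_pot_def z_def[symmetric] fl by simp
  qed
qed

theorem proposition4p2:
  fixes \<alpha> \<theta> lam :: real
  assumes "0 < \<alpha>" and "\<alpha> < 1" and "\<alpha> \<notin> \<rat>"
    and "limsup (\<lambda>n. ereal (real_of_int (cf_coeff \<alpha> n))) = 1"
    and "0 \<le> \<theta>" and "\<theta> < 1"
    and "lam \<noteq> 0"
  shows "\<not> has_eigenvalue lam \<alpha> \<theta>"
proof
  assume "has_eigenvalue lam \<alpha> \<theta>"
  then obtain E u where ep: "is_eigenpair lam \<alpha> \<theta> E u" unfolding has_eigenvalue_def by blast
  have u0: "u \<noteq> (\<lambda>_. 0)" and sm: "(\<lambda>n. (norm (u n))\<^sup>2) summable_on UNIV"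
    and eq: "\<And>n. u (n + 1) + u (n - 1) + complex_of_real (lam * sturm_pot \<alpha> \<theta> n) * u n = E * u n"
    using ep unfolding is_eigenpair_def by auto
  obtain n0 where n0: "u n0 \<noteq> 0" using u0 by blast
  have dec: "\<exists>M. \<forall>n. M \<le> \<bar>n\<bar> \<longrightarrow> norm (u n) < e" if "0 < e" for e using decay[OF sm that] .
  have ImE: "Im E = 0" by (rule Im_zero[of u "\<lambda>n. lam * sturm_pot \<alpha> \<theta> n" E n0, OF eq n0 dec])
  have irr: "\<alpha> \<notin> \<rat>" "0 < \<alpha>" "\<alpha> < 1" using assms by auto
  have "eventually (\<lambda>n. ereal (real_of_int (cf_coeff \<alpha> n)) < 2) sequentially"
    by (rule Limsup_lessD) (use assms(4) in simp)
  then obtain N0 where N0: "\<And>n. N0 \<le> n \<Longrightarrow> ereal (real_of_int (cf_coeff \<alpha> n)) < 2"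
    unfolding eventually_sequentially by blast
  have cf1: "cf_coeff \<alpha> (k+2) = 1" if "N0 \<le> k" for k
  proof -
    have "real_of_int (cf_coeff \<alpha> (k+2)) < 2" using N0[of "k+2"] that by simp
    moreover have "1 \<le> cf_coeff \<alpha> (Suc (Suc k))" using cf_ge1[OF irr] by blast
    ultimately show ?thesis by (simp add: numeral_eq_Suc)
  qed
  interpret g: gcf \<alpha> "qq \<alpha>" "pp \<alpha>" N0
  proof
    show "0 < \<alpha>" "\<alpha> < 1" using assms by auto
  next
    fix k assume "N0 \<le> k"
    then have c: "cf_coeff \<alpha> (Suc (Suc k)) = 1" using cf1 by (simp add: numeral_eq_Suc)
    show "qq \<alpha> (k+2) = qq \<alpha> (k+1) + qq \<alpha> k \<and> pp \<alpha> (k+2) = pp \<alpha> (k+1) + pp \<alpha> k"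
      using c by (simp add: numeral_eq_Suc)
  next
    fix k show "1 \<le> qq \<alpha> k" "qq \<alpha> k \<le> qq \<alpha> (Suc k)" using qq_pos_mono[OF irr] by auto
  next
    fix k
    have r: "dd \<alpha> (Suc k) = - gauss_iter \<alpha> (Suc k) * dd \<alpha> k" by (rule dd_rec[OF irr])
    have x: "0 < gauss_iter \<alpha> (Suc k)" "gauss_iter \<alpha> (Suc k) < 1" using gauss_props[OF irr, of "Suc k"] by blast+
    have nz: "dd \<alpha> k \<noteq> 0" by (rule dd_nz[OF irr])
    have "dd \<alpha> k * dd \<alpha> (Suc k) = - gauss_iter \<alpha> (Suc k) * (dd \<alpha> k * dd \<alpha> k)" unfolding r by simp
    moreover have "0 < dd \<alpha> k * dd \<alpha> k" using nz not_real_square_gt_zero by blast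
    ultimately have "dd \<alpha> k * dd \<alpha> (Suc k) < 0" using x by (simp add: mult_pos_pos)
    then show "(real_of_int (qq \<alpha> k) * \<alpha> - real_of_int (pp \<alpha> k)) * (real_of_int (qq \<alpha> (Suc k)) * \<alpha> - real_of_int (pp \<alpha> (Suc k))) < 0"
      unfolding dd_def .
    have "\<bar>dd \<alpha> (Suc k)\<bar> = gauss_iter \<alpha> (Suc k) * \<bar>dd \<alpha> k\<bar>" unfolding r using x by (simp add: abs_mult)
    also have "\<dots> < \<bar>dd \<alpha> k\<bar>" using x nz by simp
    finally show "\<bar>real_of_int (qq \<alpha> (Suc k)) * \<alpha> - real_of_int (pp \<alpha> (Suc k))\<bar> < \<bar>real_of_int (qq \<alpha> k) * \<alpha> - real_of_int (pp \<alpha> k)\<bar>"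
      unfolding dd_def .
  next
    show "\<bar>real_of_int (qq \<alpha> 0) * \<alpha> - real_of_int (pp \<alpha> 0)\<bar> < 1" using assms by simp
  next
    fix k show "\<bar>qq \<alpha> (Suc k) * pp \<alpha> k - pp \<alpha> (Suc k) * qq \<alpha> k\<bar> = 1" by (rule qq_det)
  qed
  have sv: "sturm_pot \<alpha> \<theta> n = g.vat (of_int n * \<alpha> + \<theta>)" for n
    unfolding g.vat_def using sturm_floor[OF irr(2,3)] by simp
  have reE: "E = complex_of_real (Re E)" using ImE by (simp add: complex_eq_iff)
  have eqR: "Re (u (n+1)) + Re (u (n-1)) + lam * g.vat (of_int n * \<alpha> + \<theta>) * Re (u n) = Re E * Re (u n)" for n
  proof -
    have "Re (u (n + 1) + u (n - 1) + complex_of_real (lam * sturm_pot \<alpha> \<theta> n) * u n) = Re (E * u n)"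
      using eq[of n] by simp
    then show ?thesis using ImE sv[of n] by simp
  qed
  have eqI: "Im (u (n+1)) + Im (u (n-1)) + lam * g.vat (of_int n * \<alpha> + \<theta>) * Im (u n) = Re E * Im (u n)" for n
  proof -
    have "Im (u (n + 1) + u (n - 1) + complex_of_real (lam * sturm_pot \<alpha> \<theta> n) * u n) = Im (E * u n)"
      using eq[of n] by simp
    then show ?thesis using ImE sv[of n] by simp
  qed
  show False
  proof (cases "Re (u n0) = 0")
    case False
    have decR: "\<exists>M. \<forall>n. M \<le> \<bar>n\<bar> \<longrightarrow> \<bar>Re (u n)\<bar> < e" if e0: "0 < e" for e
    proof -
      obtain M where "\<forall>n. M \<le> \<bar>n\<bar> \<longrightarrow> norm (u n) < e" using dec[OF e0] by blast
      then show ?thesis using abs_Re_le_cmod by (meson le_less_trans)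
    qed
    show False by (rule g.no_decaying_solution[of "\<lambda>n. Re (u n)" lam \<theta> "Re E" n0, OF eqR False decR])
  next
    case True
    then have "Im (u n0) \<noteq> 0" using n0 by (simp add: complex_eq_iff)
    moreover have decI: "\<exists>M. \<forall>n. M \<le> \<bar>n\<bar> \<longrightarrow> \<bar>Im (u n)\<bar> < e" if e0: "0 < e" for e
    proof -
      obtain M where "\<forall>n. M \<le> \<bar>n\<bar> \<longrightarrow> norm (u n) < e" using dec[OF e0] by blast
      then show ?thesis using abs_Im_le_cmod by (meson le_less_trans)
    qed
    ultimately show False by (rule g.no_decaying_solution[of "\<lambda>n. Im (u n)" lam \<theta> "Re E" n0, OF eqI])
  qed
qed

end
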